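(* Let $T$ be a tree rooted at a vertex $v$ and let $\bar T$ be a pruning of $T$ (as defined in the context). Then for every maximum dissociation set $\bar F$ of $\bar T$ there exists a maximum dissociation set $F$ of $T$ such that $v\in F$ if and only if $v\in \bar F$. Conversely, for every maximum dissociation set $F$ of $T$ there exists a maximum dissociation set $\bar F$ of $\bar T$ such that $v\in \bar F$ if and only if $v\in F$.
   Context: All graphs are finite, simple and undirected. A dissociation set of a graph $G$ is a set $F\subseteq V(G)$ such that $G[F]$ has maximum degree at most $1$; a maximum dissociation set is one of maximum cardinality. In a rooted tree, for a vertex $u$, $C(u)$ is the set of children of $u$, $D[u]$ is the set consisting of $u$ and all its descendants, and $T_u$ is the subtree induced by $D[u]$. A branch vertex is a vertex of degree at least $3$. Pruning: let $T$ be rooted at $v$. While the current tree has a branch vertex different from $v$, choose such a branch vertex $u\ne v$ at maximum distance from $v$; then every proper descendant of $u$ has degree at most $2$, so for each child $w$ of $u$ the subtree $T_w$ is a path with end vertex $w$, and for $i\in\{0,1,2\}$ let $C^i(u)$ be the set of children $w$ of $u$ such that $|V(T_w)|\equiv i \pmod 3$. Perform the following step (a pruning at $u$): if $|C^2(u)|\ge 1$ or $|C^1(u)|\ge 2$, delete all vertices of $D[u]$; if $|C^2(u)|=0$ and $|C^1(u)|\le 1$, delete all vertices of $D[w]$ for every $w\in C(u)\setminus\{z\}$, where $z$ is the unique vertex of $C^1(u)$ if $|C^1(u)|=1$ and $z$ is an arbitrary child of $u$ otherwise. When no branch vertex other than $v$ remains, the resulting tree $\bar T$ (rooted at $v$,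 in which every vertex other than $v$ has degree at most $2$) is called a pruning of $T$. *)

theory Defs
  imports Main
begin

definition simple_graph :: "'a set \<Rightarrow> 'a set set \<Rightarrow> bool" where
  "simple_graph V E \<longleftrightarrow> finite V \<and> (\<forall>e\<in>E. \<exists>a b. a \<noteq> b \<and> a \<in> V \<and> b \<in> V \<and> e = {a, b})"

definition is_path :: "'a set \<Rightarrow> 'a set set \<Rightarrow> 'a list \<Rightarrow> bool" where
  "is_path V E ps \<longleftrightarrow> ps \<noteq> [] \<and> distinct ps \<and> set ps \<subseteq> V \<and>
     (\<forall>i. Suc i < length ps \<longrightarrow> {ps ! i, ps ! Suc i} \<in> E)"

definition is_cycle :: "'a set \<Rightarrow> 'a set set \<Rightarrow> 'a list \<Rightarrow> bool" where
  "is_cycle V E ps \<longleftrightarrow> is_path V E ps \<and> length ps \<ge> 3 \<and> {last ps, hd ps} \<in> E"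

definition connected_graph :: "'a set \<Rightarrow> 'a set set \<Rightarrow> bool" where
  "connected_graph V E \<longleftrightarrow>
     (\<forall>a\<in>V. \<forall>b\<in>V. \<exists>ps. is_path V E ps \<and> hd ps = a \<and> last ps = b)"

definition is_tree :: "'a set \<Rightarrow> 'a set set \<Rightarrow> bool" where
  "is_tree V E \<longleftrightarrow> simple_graph V E \<and> V \<noteq> {} \<and> connected_graph V E \<and>
     \<not> (\<exists>ps. is_cycle V E ps)"

definition ind :: "'a set set \<Rightarrow> 'a set \<Rightarrow> 'a set set" where
  "ind E S = {e \<in> E. e \<subseteq> S}"

definition deg :: "'a set set \<Rightarrow> 'a \<Rightarrow> nat" where
  "deg E u = card {w. {u, w} \<in> E}"

definition dissociation_set :: "'a set \<Rightarrow> 'a set set \<Rightarrow> 'a set \<Rightarrow> bool" where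
  "dissociation_set V E F \<longleftrightarrow> F \<subseteq> V \<and> (\<forall>x\<in>F. card {y\<in>F. {x, y} \<in> E} \<le> 1)"

definition max_dissociation_set :: "'a set \<Rightarrow> 'a set set \<Rightarrow> 'a set \<Rightarrow> bool" where
  "max_dissociation_set V E F \<longleftrightarrow> dissociation_set V E F \<and>
     (\<forall>F'. dissociation_set V E F' \<longrightarrow> card F' \<le> card F)"

definition desc :: "'a set \<Rightarrow> 'a set set \<Rightarrow> 'a \<Rightarrow> 'a \<Rightarrow> 'a set" where
  "desc V E r u = {w. \<exists>ps. is_path V E ps \<and> hd ps = r \<and> last ps = w \<and> u \<in> set ps}"

definition children :: "'a set \<Rightarrow> 'a set set \<Rightarrow> 'a \<Rightarrow> 'a \<Rightarrow> 'a set" where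
  "children V E r u = {w. {u, w} \<in> E \<and> w \<in> desc V E r u \<and> w \<noteq> u}"

definition dist :: "'a set \<Rightarrow> 'a set set \<Rightarrow> 'a \<Rightarrow> 'a \<Rightarrow> nat" where
  "dist V E a b = (LEAST n. \<exists>ps. is_path V E ps \<and> hd ps = a \<and> last ps = b \<and> length ps = Suc n)"

definition children_mod :: "'a set \<Rightarrow> 'a set set \<Rightarrow> 'a \<Rightarrow> 'a \<Rightarrow> nat \<Rightarrow> 'a set" where
  "children_mod V E r u i = {w \<in> children V E r u. card (desc V E r w) mod 3 = i}"

text \<open>One pruning step of the current tree T[S] (rooted at r), where T = (V,E) is the
  original tree; the current tree is always an induced subgraph, described by its vertex set.\<close>
definition prune_step :: "'a set set \<Rightarrow> 'a \<Rightarrow> 'a set \<Rightarrow> 'a set \<Rightarrow> bool" where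
  "prune_step E r S S' \<longleftrightarrow>
    (\<exists>u. u \<in> S \<and> u \<noteq> r \<and> deg (ind E S) u \<ge> 3 \<and>
       (\<forall>u'\<in>S. u' \<noteq> r \<and> deg (ind E S) u' \<ge> 3 \<longrightarrow> dist S (ind E S) r u' \<le> dist S (ind E S) r u) \<and>
       (let C = children S (ind E S) r u;
            C1 = children_mod S (ind E S) r u 1;
            C2 = children_mod S (ind E S) r u 2 in
        ((card C2 \<ge> 1 \<or> card C1 \<ge> 2) \<and> S' = S - desc S (ind E S) r u) \<or>
        (card C2 = 0 \<and> card C1 \<le> 1 \<and>
          (\<exists>z\<in>C. (card C1 = 1 \<longrightarrow> C1 = {z}) \<and>
             S' = S - (\<Union>w\<in>C - {z}. desc S (ind E S) r w)))))"

definition is_pruning :: "'a set \<Rightarrow> 'a set set \<Rightarrow> 'a \<Rightarrow> 'a set \<Rightarrow> bool" where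
  "is_pruning V E r S \<longleftrightarrow> (prune_step E r)\<^sup>*\<^sup>* V S \<and>
     \<not> (\<exists>u\<in>S. u \<noteq> r \<and> deg (ind E S) u \<ge> 3)"

end

theory Submission
  imports Defs
begin


lemma is_path_succ:
  "is_path V E ps \<longleftrightarrow> ps \<noteq> [] \<and> distinct ps \<and> set ps \<subseteq> V \<and> successively (\<lambda>x y. {x,y} \<in> E) ps"
  unfolding is_path_def successively_conv_nth by blast

lemma succ_drop: "successively P xs \<Longrightarrow> successively P (drop i xs)"
  by (metis append_take_drop_id successively_append_iff)

lemma succ_take: "successively P xs \<Longrightarrow> successively P (take i xs)"
  by (metis append_take_drop_id successively_append_iff)

lemma is_path_take: "is_path V E ps \<Longrightarrow> 0 < k \<Longrightarrow> is_path V E (take k ps)"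
  unfolding is_path_succ by (auto simp: succ_take dest: in_set_takeD)

lemma is_path_drop: "is_path V E ps \<Longrightarrow> k < length ps \<Longrightarrow> is_path V E (drop k ps)"
  unfolding is_path_succ by (auto simp: succ_drop dest: in_set_dropD)

lemma distinct_hd_last: "distinct xs \<Longrightarrow> xs \<noteq> [] \<Longrightarrow> hd xs = last xs \<Longrightarrow> length xs = 1"
  by (metis One_nat_def distinct.simps(2) distinct_singleton last_ConsR last_in_set list.collapse
      list.sel(1) length_0_conv length_Suc_conv)

lemma meet_cycle:
  assumes p: "is_path V E p" and q: "is_path V E q" and h: "hd p = hd q"
    and b: "b \<notin> set p" "b \<notin> set q" "b \<in> V"
    and e1: "{last p, b} \<in> E" and e2: "{last q, b} \<in> E" and ne: "last p \<noteq> last q"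
  shows "\<exists>c. is_cycle V E c"
proof -
  define J where "J = {j. j < length q \<and> q ! j \<in> set p}"
  have pne: "p \<noteq> []" and qne: "q \<noteq> []" using p q by (auto simp: is_path_def)
  have "q ! 0 \<in> set p" using pne qne h by (metis hd_conv_nth hd_in_set)
  then have "0 \<in> J" using qne by (auto simp: J_def)
  have finJ: "finite J" by (auto simp: J_def)
  define j where "j = Max J"
  have jJ: "j \<in> J" using finJ \<open>0 \<in> J\<close> unfolding j_def using Max_in by blast
  have jmax: "\<And>k. k < length q \<Longrightarrow> j < k \<Longrightarrow> q ! k \<notin> set p"
    using finJ j_def J_def by (metis (mono_tags, lifting) Max_ge leD mem_Collect_eq)
  from jJ obtain i where i: "i < length p" "p ! i = q ! j" and jl: "j < length q"
    by (auto simp: J_def in_set_conv_nth)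
  define c where "c = drop i p @ [b] @ rev (drop (Suc j) q)"
  have dp: "distinct p" "distinct q" "set p \<subseteq> V" "set q \<subseteq> V"
    using p q by (auto simp: is_path_def)
  have sp: "successively (\<lambda>x y. {x,y} \<in> E) p" "successively (\<lambda>x y. {x,y} \<in> E) q"
    using p q by (auto simp: is_path_succ)
  have disj: "set (drop (Suc j) q) \<inter> set p = {}"
  proof -
    { fix x assume "x \<in> set (drop (Suc j) q)" "x \<in> set p"
      then obtain k where "k < length (drop (Suc j) q)" "drop (Suc j) q ! k = x"
        by (auto simp: in_set_conv_nth)
      then have "Suc j + k < length q" "q ! (Suc j + k) = x" by auto
      with jmax \<open>x \<in> set p\<close> have False by force }
    then show ?thesis by blast
  qed
  have lastdrop: "last (drop i p) = last p" using i by simp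
  have "distinct c"
    using dp b disj by (auto simp: c_def dest: in_set_dropD)
  moreover have "set c \<subseteq> V" using dp b by (auto simp: c_def dest: in_set_dropD)
  moreover have "successively (\<lambda>x y. {x,y} \<in> E) c"
  proof -
    have s1: "successively (\<lambda>x y. {x,y} \<in> E) (drop i p)" using sp succ_drop by blast
    have s3: "successively (\<lambda>x y. {x,y} \<in> E) (rev (drop (Suc j) q))"
      using succ_drop[OF sp(2), of "Suc j"] by (simp add: insert_commute)
    have "successively (\<lambda>x y. {x,y} \<in> E) ([b] @ rev (drop (Suc j) q))"
    proof (cases "Suc j < length q")
      case True
      then have "hd (rev (drop (Suc j) q)) = last q" by (simp add: hd_rev)
      then show ?thesis using s3 e2 True
        by (subst successively_append_iff) (auto simp: insert_commute)
    qed simp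
    then show ?thesis using s1 i e1 lastdrop unfolding c_def
      by (subst successively_append_iff) auto
  qed
  moreover have "3 \<le> length c"
  proof (cases "Suc j < length q")
    case True then show ?thesis using i by (simp add: c_def)
  next
    case False
    then have "j = length q - 1" using jl by auto
    then have "q ! j = last q" using qne by (simp add: last_conv_nth)
    then have "i \<noteq> length p - 1" using i ne pne by (auto simp: last_conv_nth)
    then show ?thesis using i by (simp add: c_def)
  qed
  moreover have "{last c, hd c} \<in> E"
  proof (cases "Suc j < length q")
    case True
    then have "last c = q ! Suc j" by (simp add: c_def last_rev hd_drop_conv_nth)
    moreover have "hd c = q ! j" using i by (simp add: c_def hd_drop_conv_nth)
    ultimately show ?thesis using successively_nth[OF sp(2) True] by (simp add: insert_commute)
  next
    case False
    then have "j = length q - 1" using jl by auto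
    then have "q ! j = last q" using qne by (simp add: last_conv_nth)
    moreover have "last c = b" using False by (simp add: c_def)
    moreover have "hd c = q ! j" using i by (simp add: c_def hd_drop_conv_nth)
    ultimately show ?thesis using e2 by (simp add: insert_commute)
  qed
  ultimately have "is_cycle V E c" unfolding is_cycle_def is_path_succ by (auto simp: c_def)
  then show ?thesis by blast
qed

lemma path_butlast:
  assumes "is_path V E p" "2 \<le> length p"
  shows "is_path V E (butlast p)" "hd (butlast p) = hd p" "last p \<notin> set (butlast p)"
    "{last (butlast p), last p} \<in> E" "p = butlast p @ [last p]" "butlast p \<noteq> []"
proof -
  have pne: "p \<noteq> []" using assms by auto
  have eq: "p = butlast p @ [last p]" using pne by simp
  have bne: "butlast p \<noteq> []" using assms by (cases p) auto
  show "is_path V E (butlast p)" using is_path_take[OF assms(1), of "length p - 1"] assms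
    by (simp add: butlast_conv_take)
  show "hd (butlast p) = hd p" using bne by (metis eq hd_append)
  show "last p \<notin> set (butlast p)" using assms(1) eq unfolding is_path_def
    by (metis distinct_append disjoint_iff list.set_intros(1))
  have "successively (\<lambda>x y. {x,y} \<in> E) (butlast p @ [last p])"
    using assms(1) eq by (simp add: is_path_succ)
  then show "{last (butlast p), last p} \<in> E" using bne
    by (simp add: successively_append_iff)
  show "p = butlast p @ [last p]" by (rule eq)
  show "butlast p \<noteq> []" by (rule bne)
qed

lemma path_unique:
  assumes acyc: "\<not> (\<exists>c. is_cycle V E c)"
  shows "is_path V E p \<Longrightarrow> is_path V E q \<Longrightarrow> hd p = hd q \<Longrightarrow> last p = last q \<Longrightarrow> p = q"
proof (induction "length p + length q" arbitrary: p q rule: less_induct)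
  case less
  have pne: "p \<noteq> []" and qne: "q \<noteq> []" using less.prems by (auto simp: is_path_def)
  show ?case
  proof (cases "length p = 1 \<or> length q = 1")
    case True
    then show ?thesis
    proof
      assume "length p = 1"
      then obtain a where pa: "p = [a]" by (cases p) auto
      then have "length q = 1" using distinct_hd_last[of q] less.prems qne by (auto simp: is_path_def)
      then obtain a' where "q = [a']" by (cases q) auto
      then show ?thesis using pa less.prems by simp
    next
      assume "length q = 1"
      then obtain a where pa: "q = [a]" by (cases q) auto
      then have "length p = 1" using distinct_hd_last[of p] less.prems pne by (auto simp: is_path_def)
      then obtain a' where "p = [a']" by (cases p) auto
      then show ?thesis using pa less.prems by simp
    qed
  next
    case False
    have "length p \<noteq> 0" "length q \<noteq> 0" using pne qne by auto
    then have lp: "2 \<le> length p" and lq: "2 \<le> length q" using False by linarith+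
    note P = path_butlast[OF less.prems(1) lp] and Q = path_butlast[OF less.prems(2) lq]
    show ?thesis
    proof (cases "last (butlast p) = last (butlast q)")
      case True
      have "butlast p = butlast q"
        apply (rule less.hyps[of "butlast p" "butlast q"])
        using lp lq P Q True less.prems by auto
      then show ?thesis using P(5) Q(5) less.prems(4) by metis
    next
      case False
      have bV: "last p \<in> V" using less.prems(1) pne unfolding is_path_def by auto
      have "\<exists>c. is_cycle V E c"
        apply (rule meet_cycle[OF P(1) Q(1), of "last p"])
        using P Q False less.prems bV by auto
      then show ?thesis using acyc by blast
    qed
  qed
qed




locale rtree =
  fixes S :: "'a set" and E :: "'a set set" and r :: 'a
  assumes fin: "finite S" and root: "r \<in> S"
    and edges: "\<forall>e\<in>E. \<exists>a b. a \<noteq> b \<and> a \<in> S \<and> b \<in> S \<and> e = {a,b}"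
    and acyc: "\<not> (\<exists>c. is_cycle S E c)"
    and reach: "\<forall>a\<in>S. \<exists>ps. is_path S E ps \<and> hd ps = r \<and> last ps = a"
begin

definition P where "P a = (THE ps. is_path S E ps \<and> hd ps = r \<and> last ps = a)"

lemma P: assumes "a \<in> S" shows "is_path S E (P a)" "hd (P a) = r" "last (P a) = a"
proof -
  obtain ps where ps: "is_path S E ps \<and> hd ps = r \<and> last ps = a" using reach assms by blast
  have "is_path S E (P a) \<and> hd (P a) = r \<and> last (P a) = a"
    unfolding P_def
  proof (rule theI[of _ ps])
    show "is_path S E ps \<and> hd ps = r \<and> last ps = a" by (rule ps)
    fix x assume "is_path S E x \<and> hd x = r \<and> last x = a"
    then show "x = ps" using path_unique[OF acyc, of x ps] ps by simp
  qed
  then show "is_path S E (P a)" "hd (P a) = r" "last (P a) = a" by auto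
qed

lemma P_eq: assumes "is_path S E ps" "hd ps = r" shows "P (last ps) = ps"
proof -
  have "last ps \<in> S" using assms unfolding is_path_def by auto
  then show ?thesis using P[of "last ps"] assms path_unique[OF acyc, of "P (last ps)" ps] by simp
qed

lemma P_ne: "a \<in> S \<Longrightarrow> P a \<noteq> []" using P(1)[of a] unfolding is_path_def by blast

lemma P_set: "a \<in> S \<Longrightarrow> set (P a) \<subseteq> S" using P(1)[of a] unfolding is_path_def by blast

lemma P_prefix: assumes "a \<in> S" "k < length (P a)" shows "P (P a ! k) = take (Suc k) (P a)"
proof -
  have "is_path S E (take (Suc k) (P a))" using is_path_take[OF P(1)[OF assms(1)]] by simp
  moreover have "hd (take (Suc k) (P a)) = r" using P(2)[OF assms(1)] P_ne[OF assms(1)] by simp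
  moreover have "last (take (Suc k) (P a)) = P a ! k" using assms(2) by (simp add: take_Suc_conv_app_nth)
  ultimately show ?thesis using P_eq[of "take (Suc k) (P a)"] by simp
qed

lemma P_r: "P r = [r]"
proof -
  have "is_path S E [r]" using root by (simp add: is_path_def)
  then show ?thesis using P_eq[of "[r]"] by simp
qed

lemma len_P_1: assumes "a \<in> S" shows "length (P a) = 1 \<longleftrightarrow> a = r"
proof
  assume "length (P a) = 1"
  then obtain x where "P a = [x]" by (cases "P a") auto
  then show "a = r" using P[OF assms] by simp
qed (simp add: P_r)

definition parent where "parent a = P a ! (length (P a) - 2)"

lemma P_parent: assumes "a \<in> S" "a \<noteq> r"
  shows "P a = P (parent a) @ [a]" "parent a \<in> S"
proof -
  have l: "2 \<le> length (P a)" using len_P_1[OF assms(1)] assms P_ne[OF assms(1)]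
    by (metis One_nat_def Suc_1 Suc_leI le_neq_implies_less length_greater_0_conv not_less_eq_eq)
  have "P (parent a) = take (Suc (length (P a) - 2)) (P a)"
    unfolding parent_def using l by (intro P_prefix assms) auto
  also have "\<dots> = butlast (P a)"
  proof -
    have "Suc (length (P a) - 2) = length (P a) - 1" using l by arith
    then show ?thesis by (simp add: butlast_conv_take)
  qed
  finally have "P (parent a) = butlast (P a)" .
  then show "P a = P (parent a) @ [a]"
    using append_butlast_last_id[OF P_ne[OF assms(1)]] P(3)[OF assms(1)] by simp
  show "parent a \<in> S" unfolding parent_def using P_set[OF assms(1)] l by (auto intro: nth_mem)
qed

lemma parent_edge: assumes "a \<in> S" "a \<noteq> r" shows "{parent a, a} \<in> E"
proof -
  have "is_path S E (P (parent a) @ [a])" using P_parent[OF assms] P(1)[OF assms(1)] by simp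
  then have "successively (\<lambda>x y. {x,y} \<in> E) (P (parent a) @ [a])" by (simp add: is_path_succ)
  then show ?thesis using P(3)[OF P_parent(2)[OF assms]] P_ne[OF P_parent(2)[OF assms]]
    by (simp add: successively_append_iff)
qed

lemma edge_in: "{a,b} \<in> E \<Longrightarrow> a \<in> S \<and> b \<in> S \<and> a \<noteq> b"
  using edges by (metis doubleton_eq_iff)

lemma desc_eq: "desc S E r u = {a \<in> S. u \<in> set (P a)}"
proof -
  { fix a assume "a \<in> desc S E r u"
    then obtain ps where ps: "is_path S E ps" "hd ps = r" "last ps = a" "u \<in> set ps"
      unfolding desc_def by blast
    then have "a \<in> S" "P a = ps" using P_eq[OF ps(1,2)] unfolding is_path_def by auto
    then have "a \<in> S \<and> u \<in> set (P a)" using ps by simp }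
  moreover
  { fix a assume "a \<in> S" "u \<in> set (P a)"
    then have "a \<in> desc S E r u" unfolding desc_def using P[of a] by blast }
  ultimately show ?thesis by blast
qed

lemma desc_S: "desc S E r u \<subseteq> S" by (auto simp: desc_eq)

lemma self_desc: "a \<in> S \<Longrightarrow> a \<in> desc S E r a"
proof -
  assume a: "a \<in> S"
  have "last (P a) \<in> set (P a)" by (rule last_in_set[OF P_ne[OF a]])
  then show ?thesis using P(3)[OF a] a by (simp add: desc_eq)
qed

lemma in_P_prefix: assumes "a \<in> S" "b \<in> set (P a)"
  shows "\<exists>k. k < length (P a) \<and> P b = take (Suc k) (P a) \<and> b = P a ! k"
proof -
  obtain k where k: "k < length (P a)" "P a ! k = b" using assms(2) by (auto simp: in_set_conv_nth)
  then show ?thesis using P_prefix[OF assms(1) k(1)] by auto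
qed

lemma len_desc: assumes "a \<in> desc S E r b"
  shows "length (P b) \<le> length (P a)" "length (P b) = length (P a) \<longleftrightarrow> a = b"
proof -
  have a: "a \<in> S" "b \<in> set (P a)" using assms by (auto simp: desc_eq)
  obtain k where k: "k < length (P a)" "P b = take (Suc k) (P a)" "b = P a ! k"
    using in_P_prefix[OF a] by blast
  show "length (P b) \<le> length (P a)" using k by simp
  have "length (P b) = Suc k" using k by simp
  moreover have "a = b \<longleftrightarrow> Suc k = length (P a)"
  proof
    assume ab: "a = b"
    have ne: "P a \<noteq> []" using P_ne[OF a(1)] .
    have d: "distinct (P a)" using P(1)[OF a(1)] unfolding is_path_def by blast
    have "P a ! (length (P a) - 1) = a" using P(3)[OF a(1)] ne by (simp add: last_conv_nth)
    moreover have "P a ! k = a" using ab k(3) by metis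
    ultimately have "P a ! (length (P a) - 1) = P a ! k" by simp
    moreover have "length (P a) - 1 < length (P a)" using ne by simp
    ultimately have "length (P a) - 1 = k" using nth_eq_iff_index_eq[OF d, of "length (P a) - 1" k] k(1) by simp
    then show "Suc k = length (P a)" using ne by (cases "P a") auto
  next
    assume sk: "Suc k = length (P a)"
    have kk: "k = length (P a) - 1" using sk by simp
    have "last (P a) = P a ! k" using P_ne[OF a(1)] by (simp add: last_conv_nth kk)
    then show "a = b" using P(3)[OF a(1)] k(3) by simp
  qed
  ultimately show "length (P b) = length (P a) \<longleftrightarrow> a = b" by auto
qed

lemma desc_trans: assumes "a \<in> desc S E r b" "c \<in> desc S E r a" shows "c \<in> desc S E r b"
proof -
  have a: "a \<in> S" "b \<in> set (P a)" "c \<in> S" "a \<in> set (P c)" using assms by (auto simp: desc_eq)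
  obtain k where kk: "P a = take (Suc k) (P c)" using in_P_prefix[OF a(3,4)] by blast
  have "set (P a) \<subseteq> set (P c)" unfolding kk by (rule set_take_subset)
  then show ?thesis using a by (auto simp: desc_eq)
qed

lemma desc_subset: "a \<in> desc S E r b \<Longrightarrow> desc S E r a \<subseteq> desc S E r b"
  using desc_trans by blast

lemma r_desc: "r \<in> desc S E r u \<Longrightarrow> u = r"
  by (auto simp: desc_eq P_r)

lemma edge_cases: assumes "{a,b} \<in> E"
  shows "(a \<noteq> r \<and> b = parent a) \<or> (b \<noteq> r \<and> a = parent b)"
proof -
  have ab: "a \<in> S" "b \<in> S" "a \<noteq> b" using edge_in[OF assms] by auto
  show ?thesis
  proof (cases "a \<in> set (P b)")
    case True
    then obtain k where k: "k < length (P b)" "b \<noteq> r \<longrightarrow> True" "P b ! k = a"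
      by (auto simp: in_set_conv_nth)
    have lastb: "P b ! (length (P b) - 1) = b" using P(3)[OF ab(2)] P_ne[OF ab(2)] by (simp add: last_conv_nth)
    have kl: "k \<noteq> length (P b) - 1" using k(3) lastb ab(3) by auto
    show ?thesis
    proof (cases "k = length (P b) - 2")
      case True
      have "b \<noteq> r" using k kl P_r by auto
      then show ?thesis using True k(3) unfolding parent_def by simp
    next
      case False
      then have k3: "k + 3 \<le> length (P b)" using k(1) kl by linarith
      have "is_cycle S E (drop k (P b))"
        unfolding is_cycle_def
        using is_path_drop[OF P(1)[OF ab(2)] k(1)] k3 k(1) k(3) P(3)[OF ab(2)] assms
        by (auto simp: hd_drop_conv_nth insert_commute)
      then show ?thesis using acyc by blast
    qed
  next
    case False
    have "is_path S E (P b @ [a])"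
      using P(1)[OF ab(2)] False ab(1) assms P(3)[OF ab(2)] P_ne[OF ab(2)]
      by (auto simp: is_path_succ successively_append_iff insert_commute)
    then have Pa: "P a = P b @ [a]" using P_eq[of "P b @ [a]"] P(2)[OF ab(2)] P_ne[OF ab(2)] by simp
    then have "a \<noteq> r" using P_r P_ne[OF ab(2)] by (cases "P b") auto
    moreover have "parent a = b" unfolding parent_def Pa using P(3)[OF ab(2)] P_ne[OF ab(2)]
      by (simp add: nth_append last_conv_nth)
    ultimately show ?thesis by simp
  qed
qed

end



context rtree begin

lemma len_parent: "a \<in> S \<Longrightarrow> a \<noteq> r \<Longrightarrow> length (P a) = Suc (length (P (parent a)))"
  using P_parent(1) by (metis length_append_singleton)

lemma parent_in_P: assumes "a \<in> S" "a \<noteq> r" shows "parent a \<in> set (P a)"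
proof -
  have "parent a \<in> set (P (parent a))"
    using P(3)[OF P_parent(2)[OF assms]] last_in_set[OF P_ne[OF P_parent(2)[OF assms]]] by simp
  then show ?thesis using P_parent(1)[OF assms] by (metis Un_iff set_append)
qed

lemma desc_parent: "a \<in> S \<Longrightarrow> a \<noteq> r \<Longrightarrow> a \<in> desc S E r (parent a)"
  using parent_in_P by (simp add: desc_eq)

lemma parent_idx: assumes "a \<in> S" "k < length (P a)" "0 < k"
  shows "parent (P a ! k) = P a ! (k - 1)"
proof -
  have "P (P a ! k) = take (Suc k) (P a)" by (rule P_prefix[OF assms(1,2)])
  then show ?thesis unfolding parent_def using assms(2,3) by simp
qed

lemma P_nth_not_r: assumes "a \<in> S" "k < length (P a)" "0 < k" shows "P a ! k \<noteq> r"
proof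
  assume h: "P a ! k = r"
  have "P a ! 0 = r" using P(2)[OF assms(1)] P_ne[OF assms(1)] by (simp add: hd_conv_nth)
  moreover have "distinct (P a)" using P(1)[OF assms(1)] unfolding is_path_def by blast
  ultimately show False using h assms nth_eq_iff_index_eq[of "P a" k 0] P_ne[OF assms(1)] by auto
qed

lemma children_eq: "children S E r u = {w \<in> S. w \<noteq> r \<and> parent w = u}"
proof (intro set_eqI iffI)
  fix w assume w: "w \<in> children S E r u"
  then have e: "{u,w} \<in> E" and wd: "w \<in> desc S E r u" and wu: "w \<noteq> u"
    unfolding children_def by auto
  have S: "u \<in> S" "w \<in> S" using edge_in[OF e] by auto
  from edge_cases[OF e] show "w \<in> {w \<in> S. w \<noteq> r \<and> parent w = u}"
  proof
    assume h: "u \<noteq> r \<and> w = parent u"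
    then have "length (P u) = Suc (length (P w))" using len_parent[OF S(1)] by simp
    moreover have "length (P u) \<le> length (P w)" using len_desc(1)[OF wd] .
    ultimately show ?thesis by simp
  next
    assume "w \<noteq> r \<and> u = parent w" then show ?thesis using S by auto
  qed
next
  fix w assume w: "w \<in> {w \<in> S. w \<noteq> r \<and> parent w = u}"
  then have w': "w \<in> S" "w \<noteq> r" "parent w = u" by auto
  have "{u, w} \<in> E" using parent_edge[OF w'(1,2)] w'(3) by simp
  moreover have "w \<in> desc S E r u" using desc_parent[OF w'(1,2)] w'(3) by simp
  moreover have "w \<noteq> u" using len_parent[OF w'(1,2)] w'(3) by auto
  ultimately show "w \<in> children S E r u" unfolding children_def by blast
qed

lemma children_S: "children S E r u \<subseteq> S" by (auto simp: children_eq)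

lemma finite_children: "finite (children S E r u)" using fin children_S finite_subset by blast

lemma nbrs: assumes "a \<in> S"
  shows "{w. {a,w} \<in> E} = (if a = r then {} else {parent a}) \<union> children S E r a"
proof (intro set_eqI iffI)
  fix w assume "w \<in> {w. {a,w} \<in> E}"
  then have e: "{a,w} \<in> E" by simp
  then have "w \<in> S" using edge_in by blast
  from edge_cases[OF e] show "w \<in> (if a = r then {} else {parent a}) \<union> children S E r a"
    using \<open>w \<in> S\<close> by (auto simp: children_eq)
next
  fix w assume w: "w \<in> (if a = r then {} else {parent a}) \<union> children S E r a"
  show "w \<in> {w. {a,w} \<in> E}"
  proof (cases "w \<in> children S E r a")
    case True then show ?thesis using parent_edge[of w] by (auto simp: children_eq insert_commute)
  next
    case False
    then have "a \<noteq> r" "w = parent a" using w by (auto split: if_splits)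
    then show ?thesis using parent_edge[OF assms] by (simp add: insert_commute)
  qed
qed

lemma parent_not_child: assumes "a \<in> S" "a \<noteq> r" shows "parent a \<notin> children S E r a"
proof
  assume "parent a \<in> children S E r a"
  then have "parent a \<in> S" "parent a \<noteq> r" "parent (parent a) = a" by (auto simp: children_eq)
  then have "length (P (parent a)) = Suc (length (P a))" using len_parent by metis
  then show False using len_parent[OF assms] by simp
qed

lemma deg_eq: assumes "a \<in> S" "a \<noteq> r" shows "deg E a = Suc (card (children S E r a))"
  unfolding deg_def nbrs[OF assms(1)] using assms parent_not_child[OF assms] finite_children by simp

lemma dist_eq: assumes "a \<in> S" shows "dist S E r a = length (P a) - 1"
  unfolding dist_def
proof (rule Least_equality)
  show "\<exists>ps. is_path S E ps \<and> hd ps = r \<and> last ps = a \<and> length ps = Suc (length (P a) - 1)"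
    using P[OF assms] P_ne[OF assms] by (intro exI[of _ "P a"]) auto
next
  fix n assume "\<exists>ps. is_path S E ps \<and> hd ps = r \<and> last ps = a \<and> length ps = Suc n"
  then obtain ps where ps: "is_path S E ps" "hd ps = r" "last ps = a" "length ps = Suc n" by blast
  have "P a = ps" using P_eq[OF ps(1,2)] ps(3) by simp
  then show "length (P a) - 1 \<le> n" using ps(4) by simp
qed

lemma child_len: "w \<in> children S E r u \<Longrightarrow> length (P w) = Suc (length (P u))"
  using len_parent by (auto simp: children_eq)

lemma child_in_desc: "w \<in> children S E r u \<Longrightarrow> w \<in> desc S E r u"
  unfolding children_def by blast

lemma desc_decomp: assumes "u \<in> S"
  shows "desc S E r u = insert u (\<Union>w\<in>children S E r u. desc S E r w)"
proof (intro set_eqI iffI)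
  fix a assume a: "a \<in> desc S E r u"
  show "a \<in> insert u (\<Union>w\<in>children S E r u. desc S E r w)"
  proof (cases "a = u")
    case False
    have aS: "a \<in> S" "u \<in> set (P a)" using a by (auto simp: desc_eq)
    obtain k where k: "k < length (P a)" "P u = take (Suc k) (P a)" "u = P a ! k"
      using in_P_prefix[OF aS] by blast
    have "length (P u) < length (P a)" using len_desc[OF a] False by simp
    then have k1: "Suc k < length (P a)" using k by simp
    define w where "w = P a ! Suc k"
    have wS: "w \<in> S" using P_set[OF aS(1)] k1 unfolding w_def by (auto intro: nth_mem)
    have "w \<noteq> r" using P_nth_not_r[OF aS(1) k1] unfolding w_def by simp
    moreover have "parent w = u" using parent_idx[OF aS(1) k1] k(3) unfolding w_def by simp
    ultimately have wc: "w \<in> children S E r u" using wS by (simp add: children_eq)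
    have "a \<in> desc S E r w" using aS k1 unfolding w_def by (auto simp: desc_eq intro: nth_mem)
    then show ?thesis using wc by blast
  qed simp
next
  fix a assume "a \<in> insert u (\<Union>w\<in>children S E r u. desc S E r w)"
  then show "a \<in> desc S E r u"
    using self_desc[OF assms] desc_subset[OF child_in_desc] by blast
qed

lemma desc_child_disj:
  assumes "w1 \<in> children S E r u" "w2 \<in> children S E r u" "a \<in> desc S E r w1" "a \<in> desc S E r w2"
  shows "w1 = w2"
proof -
  have aS: "a \<in> S" "w1 \<in> set (P a)" "w2 \<in> set (P a)" using assms by (auto simp: desc_eq)
  obtain k1 where k1: "k1 < length (P a)" "P w1 = take (Suc k1) (P a)" "w1 = P a ! k1"
    using in_P_prefix[OF aS(1,2)] by blast
  obtain k2 where k2: "k2 < length (P a)" "P w2 = take (Suc k2) (P a)" "w2 = P a ! k2"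
    using in_P_prefix[OF aS(1,3)] by blast
  have "length (P w1) = length (P w2)" using child_len assms(1,2) by simp
  then have "k1 = k2" using k1 k2 by simp
  then show ?thesis using k1 k2 by simp
qed

lemma parent_in_desc: assumes "y \<in> desc S E r u" "y \<noteq> u"
  shows "y \<noteq> r" "parent y \<in> desc S E r u"
proof -
  have yS: "y \<in> S" "u \<in> set (P y)" using assms by (auto simp: desc_eq)
  show yr: "y \<noteq> r" using assms yS by (auto simp: P_r)
  have "u \<in> set (P (parent y))" using P_parent(1)[OF yS(1) yr] yS(2) assms(2) by (metis Un_iff empty_iff empty_set set_ConsD set_append)
  then show "parent y \<in> desc S E r u" using P_parent(2)[OF yS(1) yr] by (simp add: desc_eq)
qed

lemma nbr_out: assumes "x \<in> S" "x \<notin> X" "y \<in> X" "{x,y} \<in> E" "\<forall>a\<in>X. desc S E r a \<subseteq> X"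
  shows "y \<noteq> r \<and> x = parent y"
proof -
  from edge_cases[OF assms(4)] show ?thesis
  proof
    assume "x \<noteq> r \<and> y = parent x"
    then have "x \<in> desc S E r y" using desc_parent[OF assms(1)] by simp
    then show ?thesis using assms by blast
  qed simp
qed

end



context rtree begin

definition chainL where "chainL w L \<longleftrightarrow> L \<noteq> [] \<and> distinct L \<and> set L = desc S E r w \<and> L ! 0 = w \<and>
   (\<forall>i. Suc i < length L \<longrightarrow> parent (L ! Suc i) = L ! i \<and> children S E r (L ! i) = {L ! Suc i}) \<and>
   children S E r (last L) = {}"

lemma finite_desc: "finite (desc S E r w)" using fin desc_S finite_subset by blast

lemma chain_exists:
  assumes "w \<in> S" "\<forall>x\<in>desc S E r w. card (children S E r x) \<le> 1"
  shows "\<exists>L. chainL w L"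
  using assms
proof (induction "card (desc S E r w)" arbitrary: w rule: less_induct)
  case less
  have "card (children S E r w) \<le> 1" using less.prems self_desc by blast
  then have "\<forall>x\<in>children S E r w. \<forall>y\<in>children S E r w. x = y"
    using card_le_Suc0_iff_eq[OF finite_children] by simp
  then have "children S E r w = {} \<or> (\<exists>c. children S E r w = {c})" by blast
  then show ?case
  proof
    assume h: "children S E r w = {}"
    then have "desc S E r w = {w}" using desc_decomp[OF less.prems(1)] by simp
    then have "chainL w [w]" using h unfolding chainL_def by simp
    then show ?thesis by blast
  next
    assume "\<exists>c. children S E r w = {c}"
    then obtain c where c: "children S E r w = {c}" by blast
    have cc: "c \<in> children S E r w" using c by simp
    have cS: "c \<in> S" "c \<noteq> r" "parent c = w" using cc by (auto simp: children_eq)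
    have dw: "desc S E r w = insert w (desc S E r c)" using desc_decomp[OF less.prems(1)] c by simp
    have wnot: "w \<notin> desc S E r c"
    proof
      assume "w \<in> desc S E r c"
      then have "length (P c) \<le> length (P w)" by (rule len_desc(1))
      then show False using child_len[OF cc] by simp
    qed
    have lt: "card (desc S E r c) < card (desc S E r w)"
      using dw wnot finite_desc by simp
    have "\<forall>x\<in>desc S E r c. card (children S E r x) \<le> 1" using less.prems(2) dw by blast
    then obtain Lc where Lc: "chainL c Lc" using less.hyps[OF lt cS(1)] by blast
    have Lc': "Lc \<noteq> []" "distinct Lc" "set Lc = desc S E r c" "Lc ! 0 = c"
      "\<And>i. Suc i < length Lc \<Longrightarrow> parent (Lc ! Suc i) = Lc ! i \<and> children S E r (Lc ! i) = {Lc ! Suc i}"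
      "children S E r (last Lc) = {}"
      using Lc unfolding chainL_def by blast+
    have "chainL w (w # Lc)"
      unfolding chainL_def
    proof (intro conjI allI impI)
      show "distinct (w # Lc)" using Lc' wnot by simp
      show "set (w # Lc) = desc S E r w" using Lc' dw by simp
      show "children S E r (last (w # Lc)) = {}" using Lc' by simp
      fix i assume i: "Suc i < length (w # Lc)"
      show "parent ((w # Lc) ! Suc i) = (w # Lc) ! i"
      proof (cases i)
        case 0 then show ?thesis using Lc' cS by simp
      next
        case (Suc j) then show ?thesis using Lc'(5)[of j] i by simp
      qed
      show "children S E r ((w # Lc) ! i) = {(w # Lc) ! Suc i}"
      proof (cases i)
        case 0 then show ?thesis using Lc' c by simp
      next
        case (Suc j) then show ?thesis using Lc'(5)[of j] i by simp
      qed
    qed simp_all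
    then show ?thesis by blast
  qed
qed

lemma rtree_remove:
  assumes X: "X \<subseteq> S" "r \<notin> X" "\<forall>a\<in>X. desc S E r a \<subseteq> X"
  shows "rtree (S - X) (ind E (S - X)) r"
proof
  show "finite (S - X)" using fin by simp
  show "r \<in> S - X" using root X by simp
  show "\<forall>e\<in>ind E (S - X). \<exists>a b. a \<noteq> b \<and> a \<in> S - X \<and> b \<in> S - X \<and> e = {a, b}"
  proof
    fix e assume "e \<in> ind E (S - X)"
    then have e: "e \<in> E" "e \<subseteq> S - X" by (auto simp: ind_def)
    then obtain a b where "a \<noteq> b" "e = {a,b}" using edges by blast
    then show "\<exists>a b. a \<noteq> b \<and> a \<in> S - X \<and> b \<in> S - X \<and> e = {a, b}" using e by blast
  qed
  show "\<not> (\<exists>c. is_cycle (S - X) (ind E (S - X)) c)"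
  proof
    assume "\<exists>c. is_cycle (S - X) (ind E (S - X)) c"
    then obtain c where c: "is_cycle (S - X) (ind E (S - X)) c" by blast
    have "is_cycle S E c" using c unfolding is_cycle_def is_path_def ind_def by auto
    then show False using acyc by blast
  qed
  show "\<forall>a\<in>S - X. \<exists>ps. is_path (S - X) (ind E (S - X)) ps \<and> hd ps = r \<and> last ps = a"
  proof
    fix a assume a: "a \<in> S - X"
    have sub: "set (P a) \<subseteq> S - X"
    proof
      fix y assume y: "y \<in> set (P a)"
      have "y \<in> S" using P_set a y by blast
      moreover have "y \<notin> X"
      proof
        assume "y \<in> X"
        moreover have "a \<in> desc S E r y" using a y by (simp add: desc_eq)
        ultimately show False using X a by blast
      qed
      ultimately show "y \<in> S - X" by simp
    qed
    have "successively (\<lambda>x y. {x,y} \<in> E) (P a)" using P(1)[of a] a by (simp add: is_path_succ)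
    then have "successively (\<lambda>x y. {x,y} \<in> ind E (S - X)) (P a)"
      by (rule successively_mono) (use sub in \<open>auto simp: ind_def\<close>)
    then have "is_path (S - X) (ind E (S - X)) (P a)"
      using P(1)[of a] a sub by (simp add: is_path_succ)
    then show "\<exists>ps. is_path (S - X) (ind E (S - X)) ps \<and> hd ps = r \<and> last ps = a"
      using P(2,3)[of a] a by blast
  qed
qed

end

lemma diss_restrict:
  assumes "dissociation_set S E F" "finite S"
  shows "dissociation_set (S - X) (ind E (S - X)) (F - X)"
  unfolding dissociation_set_def
proof (intro conjI ballI)
  show "F - X \<subseteq> S - X" using assms unfolding dissociation_set_def by blast
  fix x assume x: "x \<in> F - X"
  have fF: "finite F" using assms finite_subset unfolding dissociation_set_def by blast
  have "card {y \<in> F - X. {x, y} \<in> ind E (S - X)} \<le> card {y \<in> F. {x, y} \<in> E}"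
    by (rule card_mono) (use fF in \<open>auto simp: ind_def\<close>)
  also have "\<dots> \<le> 1" using assms x unfolding dissociation_set_def by blast
  finally show "card {y \<in> F - X. {x, y} \<in> ind E (S - X)} \<le> 1" .
qed

lemma transfer:
  assumes fin: "finite S" and X: "X \<subseteq> S" "r \<notin> X" "FX \<subseteq> X"
    and bound: "\<And>F. dissociation_set S E F \<Longrightarrow> card (F \<inter> X) \<le> card FX"
    and union: "\<And>F'. dissociation_set (S - X) (ind E (S - X)) F' \<Longrightarrow> dissociation_set S E (F' \<union> FX)"
  shows "(\<forall>F'. max_dissociation_set (S - X) (ind E (S - X)) F' \<longrightarrow>
             (\<exists>F. max_dissociation_set S E F \<and> (r \<in> F \<longleftrightarrow> r \<in> F')))
       \<and> (\<forall>F. max_dissociation_set S E F \<longrightarrow>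
             (\<exists>F'. max_dissociation_set (S - X) (ind E (S - X)) F' \<and> (r \<in> F' \<longleftrightarrow> r \<in> F)))"
proof (intro conjI allI impI)
  have finX: "finite X" using fin X finite_subset by blast
  have finFX: "finite FX" using finX X finite_subset by blast
  have split: "card G = card (G - X) + card (G \<inter> X)" if "G \<subseteq> S" for G
  proof -
    have "finite G" using that fin finite_subset by blast
    then show ?thesis using card_Int_Diff[of G X] by simp
  qed
  have cu: "card (F' \<union> FX) = card F' + card FX" if "F' \<subseteq> S - X" for F'
  proof -
    have "finite F'" using that fin finite_subset by blast
    moreover have "F' \<inter> FX = {}" using that X by blast
    ultimately show ?thesis using finFX card_Un_disjoint by blast
  qed
  fix F' assume F': "max_dissociation_set (S - X) (ind E (S - X)) F'"
  have dF': "dissociation_set (S - X) (ind E (S - X)) F'" using F' unfolding max_dissociation_set_def by blast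
  have sF': "F' \<subseteq> S - X" using dF' unfolding dissociation_set_def by blast
  have dU: "dissociation_set S E (F' \<union> FX)" using union[OF dF'] .
  have "max_dissociation_set S E (F' \<union> FX)"
    unfolding max_dissociation_set_def
  proof (intro conjI allI impI)
    show "dissociation_set S E (F' \<union> FX)" by (rule dU)
    fix G assume G: "dissociation_set S E G"
    have GS: "G \<subseteq> S" using G unfolding dissociation_set_def by blast
    have "card (G - X) \<le> card F'"
      using F' diss_restrict[OF G fin] unfolding max_dissociation_set_def by blast
    moreover have "card (G \<inter> X) \<le> card FX" using bound[OF G] .
    ultimately show "card G \<le> card (F' \<union> FX)" using split[OF GS] cu[OF sF'] by simp
  qed
  moreover have "r \<in> F' \<union> FX \<longleftrightarrow> r \<in> F'" using X by blast
  ultimately show "\<exists>F. max_dissociation_set S E F \<and> (r \<in> F \<longleftrightarrow> r \<in> F')" by blast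
next
  have finX: "finite X" using fin X finite_subset by blast
  have finFX: "finite FX" using finX X finite_subset by blast
  have split: "card G = card (G - X) + card (G \<inter> X)" if "G \<subseteq> S" for G
  proof -
    have "finite G" using that fin finite_subset by blast
    then show ?thesis using card_Int_Diff[of G X] by simp
  qed
  have cu: "card (F' \<union> FX) = card F' + card FX" if "F' \<subseteq> S - X" for F'
  proof -
    have "finite F'" using that fin finite_subset by blast
    moreover have "F' \<inter> FX = {}" using that X by blast
    ultimately show ?thesis using finFX card_Un_disjoint by blast
  qed
  fix F assume F: "max_dissociation_set S E F"
  have dF: "dissociation_set S E F" using F unfolding max_dissociation_set_def by blast
  have FS: "F \<subseteq> S" using dF unfolding dissociation_set_def by blast
  have "max_dissociation_set (S - X) (ind E (S - X)) (F - X)"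
    unfolding max_dissociation_set_def
  proof (intro conjI allI impI)
    show "dissociation_set (S - X) (ind E (S - X)) (F - X)" by (rule diss_restrict[OF dF fin])
    fix G assume G: "dissociation_set (S - X) (ind E (S - X)) G"
    have GS: "G \<subseteq> S - X" using G unfolding dissociation_set_def by blast
    have "card (G \<union> FX) \<le> card F" using F union[OF G] unfolding max_dissociation_set_def by blast
    moreover have "card (F \<inter> X) \<le> card FX" using bound[OF dF] .
    ultimately show "card G \<le> card (F - X)" using split[OF FS] cu[OF GS] by simp
  qed
  moreover have "r \<in> F - X \<longleftrightarrow> r \<in> F" using X by blast
  ultimately show "\<exists>F'. max_dissociation_set (S - X) (ind E (S - X)) F' \<and> (r \<in> F' \<longleftrightarrow> r \<in> F)" by blast
qed

lemma triple_bound: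
  assumes dF: "dissociation_set S E F" and fin: "finite S" "finite I" and X: "FX \<subseteq> X" "X \<subseteq> S"
    and cardI: "card (X - FX) \<le> card I"
    and trip: "\<And>k. k \<in> I \<Longrightarrow> \<exists>a b c. T k = {a,b,c} \<and> a \<noteq> c \<and> {a,b} \<in> E \<and> {b,c} \<in> E"
    and sub: "\<And>k. k \<in> I \<Longrightarrow> T k \<subseteq> X"
    and disj: "\<And>k k'. k \<in> I \<Longrightarrow> k' \<in> I \<Longrightarrow> k \<noteq> k' \<Longrightarrow> T k \<inter> T k' = {}"
  shows "card (F \<inter> X) \<le> card FX"
proof -
  have fF: "finite F" using dF fin finite_subset unfolding dissociation_set_def by blast
  have ex: "\<exists>x\<in>T k. x \<notin> F" if k: "k \<in> I" for k
  proof (rule ccontr)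
    assume "\<not> (\<exists>x\<in>T k. x \<notin> F)"
    then have TF: "T k \<subseteq> F" by blast
    obtain a b c where abc: "T k = {a,b,c}" "a \<noteq> c" "{a,b} \<in> E" "{b,c} \<in> E" using trip[OF k] by blast
    have "{a,c} \<subseteq> {y \<in> F. {b, y} \<in> E}" using TF abc by (auto simp: insert_commute)
    then have "card {a,c} \<le> card {y \<in> F. {b, y} \<in> E}" by (rule card_mono[rotated]) (use fF in simp)
    moreover have "card {y \<in> F. {b, y} \<in> E} \<le> 1" using dF TF abc unfolding dissociation_set_def by blast
    ultimately show False using abc(2) by simp
  qed
  define g where "g k = (SOME x. x \<in> T k \<and> x \<notin> F)" for k
  have g: "g k \<in> T k" "g k \<notin> F" if "k \<in> I" for k
    using someI_ex[of "\<lambda>x. x \<in> T k \<and> x \<notin> F"] ex[OF that] unfolding g_def by blast+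
  have finX: "finite X" using finite_subset[OF X(2) fin(1)] .
  have inj: "inj_on g I"
  proof (rule inj_onI)
    fix k k' assume kk: "k \<in> I" "k' \<in> I" "g k = g k'"
    show "k = k'"
    proof (rule ccontr)
      assume "k \<noteq> k'"
      then have "T k \<inter> T k' = {}" using disj kk by simp
      moreover have "g k \<in> T k" using g(1)[OF kk(1)] .
      moreover have "g k \<in> T k'" using g(1)[OF kk(2)] kk(3) by simp
      ultimately show False by blast
    qed
  qed
  have "g ` I \<subseteq> X - F"
  proof
    fix x assume "x \<in> g ` I"
    then obtain k where k: "k \<in> I" "x = g k" by blast
    then show "x \<in> X - F" using g[OF k(1)] sub[OF k(1)] by blast
  qed
  moreover have "finite (X - F)" using finX by simp
  ultimately have "card (g ` I) \<le> card (X - F)" by (simp add: card_mono)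
  then have "card I \<le> card (X - F)" using card_image[OF inj] by simp
  moreover have "finite X" by (rule finX)
  ultimately have "card (X - FX) \<le> card (X - F)" using cardI by simp
  moreover have "card (X - FX) = card X - card FX" using \<open>finite X\<close> X card_Diff_subset finite_subset by blast
  moreover have "card (X - F) = card X - card (X \<inter> F)" using \<open>finite X\<close> card_Diff_subset_Int[of X F] by simp
  moreover have "card FX \<le> card X" using \<open>finite X\<close> X card_mono by blast
  moreover have "card (X \<inter> F) \<le> card X" using \<open>finite X\<close> card_mono[of X "X \<inter> F"] by simp
  ultimately show ?thesis by (simp add: Int_commute)
qed




context rtree begin

lemma union_general:
  assumes X: "X \<subseteq> S" "\<forall>a\<in>X. desc S E r a \<subseteq> X" and FX: "FX \<subseteq> X"
    and tops: "\<forall>y\<in>FX. y \<noteq> r \<and> parent y \<in> X"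
    and inner: "\<forall>x\<in>FX. card {y \<in> FX. {x,y} \<in> E} \<le> 1"
    and dF': "dissociation_set (S - X) (ind E (S - X)) F'"
  shows "dissociation_set S E (F' \<union> FX)"
  unfolding dissociation_set_def
proof (intro conjI ballI)
  have F'S: "F' \<subseteq> S - X" using dF' unfolding dissociation_set_def by blast
  show "F' \<union> FX \<subseteq> S" using F'S FX X by blast
  have finF': "finite F'" using F'S fin finite_subset by blast
  have "FX \<subseteq> S" using FX X(1) by blast
  then have finFX: "finite FX" by (rule finite_subset[OF _ fin])
  fix x assume x: "x \<in> F' \<union> FX"
  show "card {y \<in> F' \<union> FX. {x, y} \<in> E} \<le> 1"
  proof (cases "x \<in> F'")
    case True
    have "{y \<in> F' \<union> FX. {x, y} \<in> E} \<subseteq> {y \<in> F'. {x, y} \<in> ind E (S - X)}"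
    proof
      fix y assume y: "y \<in> {y \<in> F' \<union> FX. {x, y} \<in> E}"
      have "y \<notin> FX"
      proof
        assume yF: "y \<in> FX"
        have "x \<in> S" "x \<notin> X" "y \<in> X" using True F'S yF FX by auto
        then have "x = parent y" using nbr_out[of x X y] y X(2) by blast
        then show False using tops yF \<open>x \<notin> X\<close> by auto
      qed
      then show "y \<in> {y \<in> F'. {x, y} \<in> ind E (S - X)}" using y True F'S by (auto simp: ind_def)
    qed
    then have "card {y \<in> F' \<union> FX. {x, y} \<in> E} \<le> card {y \<in> F'. {x, y} \<in> ind E (S - X)}"
      by (rule card_mono[rotated]) (use finF' in simp)
    also have "\<dots> \<le> 1" using dF' True unfolding dissociation_set_def by blast
    finally show ?thesis .
  next
    case False
    then have xF: "x \<in> FX" using x by blast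
    have "{y \<in> F' \<union> FX. {x, y} \<in> E} \<subseteq> {y \<in> FX. {x, y} \<in> E}"
    proof
      fix y assume y: "y \<in> {y \<in> F' \<union> FX. {x, y} \<in> E}"
      have "y \<notin> F'"
      proof
        assume yF: "y \<in> F'"
        have "y \<in> S" "y \<notin> X" "x \<in> X" using yF F'S xF FX by auto
        moreover have "{y, x} \<in> E" using y by (simp add: insert_commute)
        ultimately have "y = parent x" using nbr_out[of y X x] X(2) by blast
        then show False using tops xF \<open>y \<notin> X\<close> by auto
      qed
      then show "y \<in> {y \<in> FX. {x, y} \<in> E}" using y by blast
    qed
    then have "card {y \<in> F' \<union> FX. {x, y} \<in> E} \<le> card {y \<in> FX. {x, y} \<in> E}"
      by (rule card_mono[rotated]) (use finFX in simp)
    also have "\<dots> \<le> 1" using inner xF by blast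
    finally show ?thesis .
  qed
qed

end

locale spider = rtree +
  fixes u assumes uS: "u \<in> S" and ur: "u \<noteq> r"
  and maxd: "\<forall>x\<in>S. x \<noteq> r \<and> 3 \<le> deg E x \<longrightarrow> dist S E r x \<le> dist S E r u"
begin

abbreviation "C \<equiv> children S E r u"

definition L where "L w = (SOME L. chainL w L)"

lemma C_props: assumes "w \<in> C" shows "w \<in> S" "w \<noteq> r" "parent w = u"
  using assms by (auto simp: children_eq)

lemma u_notin: assumes "w \<in> C" shows "u \<notin> desc S E r w"
proof
  assume "u \<in> desc S E r w"
  then have "length (P w) \<le> length (P u)" by (rule len_desc(1))
  then show False using child_len[OF assms] by simp
qed

lemma r_notin: "w \<in> C \<Longrightarrow> x \<in> desc S E r w \<Longrightarrow> x \<noteq> r"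
  using r_desc C_props(2) by blast

lemma few_children: assumes w: "w \<in> C" and x: "x \<in> desc S E r w"
  shows "card (children S E r x) \<le> 1"
proof (rule ccontr)
  assume "\<not> card (children S E r x) \<le> 1"
  have xS: "x \<in> S" using x desc_S by blast
  have xr: "x \<noteq> r" using r_notin[OF w x] .
  have "3 \<le> deg E x" using deg_eq[OF xS xr] \<open>\<not> card (children S E r x) \<le> 1\<close> by simp
  then have "dist S E r x \<le> dist S E r u" using maxd xS xr by blast
  then have "length (P x) - 1 \<le> length (P u) - 1" using dist_eq xS uS by simp
  moreover have "length (P w) \<le> length (P x)" using len_desc(1)[OF x] .
  moreover have "length (P w) = Suc (length (P u))" using child_len[OF w] .
  moreover have "length (P u) \<noteq> 0" using P_ne[OF uS] by simp
  ultimately show False by linarith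
qed

lemma chainL_L: assumes "w \<in> C" shows "chainL w (L w)"
proof -
  have "\<exists>L. chainL w L" using chain_exists C_props(1)[OF assms] few_children[OF assms] by blast
  then show ?thesis unfolding L_def by (rule someI_ex)
qed

lemma Lf: assumes "w \<in> C"
  shows "L w \<noteq> []" "distinct (L w)" "set (L w) = desc S E r w" "L w ! 0 = w"
    "\<And>i. Suc i < length (L w) \<Longrightarrow> parent (L w ! Suc i) = L w ! i"
    "\<And>i. Suc i < length (L w) \<Longrightarrow> children S E r (L w ! i) = {L w ! Suc i}"
    "children S E r (last (L w)) = {}"
  using chainL_L[OF assms] unfolding chainL_def by blast+

lemma n_card: "w \<in> C \<Longrightarrow> length (L w) = card (desc S E r w)"
  using Lf(2,3) distinct_card by metis

lemma Lmem: assumes "w \<in> C" "i < length (L w)"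
  shows "L w ! i \<in> desc S E r w" "L w ! i \<in> S" "L w ! i \<noteq> r" "L w ! i \<noteq> u"
proof -
  show m: "L w ! i \<in> desc S E r w" using Lf(3)[OF assms(1)] assms(2) nth_mem by metis
  then show "L w ! i \<in> S" using desc_S by blast
  show "L w ! i \<noteq> r" using r_notin[OF assms(1) m] .
  show "L w ! i \<noteq> u" using u_notin[OF assms(1)] m by auto
qed

lemma Lparent: assumes "w \<in> C" "i < length (L w)"
  shows "parent (L w ! i) = (if i = 0 then u else L w ! (i - 1))"
proof (cases i)
  case 0 then show ?thesis using Lf(4)[OF assms(1)] C_props(3)[OF assms(1)] by simp
next
  case (Suc j) then show ?thesis using Lf(5)[OF assms(1), of j] assms(2) by simp
qed

lemma Lchildren: assumes "w \<in> C" "i < length (L w)"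
  shows "children S E r (L w ! i) = (if Suc i < length (L w) then {L w ! Suc i} else {})"
proof (cases "Suc i < length (L w)")
  case True then show ?thesis using Lf(6)[OF assms(1)] by simp
next
  case False
  then have "i = length (L w) - 1" using assms(2) by simp
  then have "L w ! i = last (L w)" using Lf(1)[OF assms(1)] by (simp add: last_conv_nth)
  then show ?thesis using False Lf(7)[OF assms(1)] by simp
qed

lemma Lnbrs: assumes "w \<in> C" "i < length (L w)"
  shows "{y. {L w ! i, y} \<in> E} =
    insert (if i = 0 then u else L w ! (i - 1)) (if Suc i < length (L w) then {L w ! Suc i} else {})"
  using nbrs[OF Lmem(2)[OF assms]] Lmem(3)[OF assms] Lparent[OF assms] Lchildren[OF assms] by simp

lemma coords: assumes "w \<in> C" "w' \<in> C" "i < length (L w)" "i' < length (L w')" "L w ! i = L w' ! i'"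
  shows "w = w' \<and> i = i'"
proof -
  have "L w ! i \<in> desc S E r w" "L w ! i \<in> desc S E r w'"
    using Lmem(1)[OF assms(1,3)] Lmem(1)[OF assms(2,4)] assms(5) by auto
  then have ww: "w = w'" using desc_child_disj[OF assms(1,2)] by blast
  then have "i = i'" using nth_eq_iff_index_eq[OF Lf(2)[OF assms(1)] assms(3)] assms(4,5) by simp
  then show ?thesis using ww by simp
qed

lemma desc_w_elem: assumes "w \<in> C" "x \<in> desc S E r w" shows "\<exists>i<length (L w). x = L w ! i"
  using assms Lf(3)[OF assms(1)] by (metis in_set_conv_nth)

lemma desc_u_elem: assumes "x \<in> desc S E r u" "x \<noteq> u" shows "\<exists>w\<in>C. \<exists>i<length (L w). x = L w ! i"
proof -
  obtain w where "w \<in> C" "x \<in> desc S E r w" using desc_decomp[OF uS] assms by blast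
  then show ?thesis using desc_w_elem by blast
qed

lemma desc_w_sub: "w \<in> C \<Longrightarrow> desc S E r w \<subseteq> desc S E r u"
  using desc_subset child_in_desc by blast

lemma edge_L: assumes "w \<in> C" "Suc i < length (L w)" shows "{L w ! i, L w ! Suc i} \<in> E"
  using parent_edge[OF Lmem(2,3)[OF assms(1,2)]] Lf(5)[OF assms] by simp

lemma edge_u: assumes "w \<in> C" shows "{u, L w ! 0} \<in> E"
  using parent_edge[OF C_props(1,2)[OF assms]] C_props(3)[OF assms] Lf(4)[OF assms] by simp

definition tri where "tri w j = {L w ! j, L w ! Suc j, L w ! Suc (Suc j)}"

lemma tri_P3: assumes "w \<in> C" "j + 2 < length (L w)"
  shows "\<exists>a b c. tri w j = {a,b,c} \<and> a \<noteq> c \<and> {a,b} \<in> E \<and> {b,c} \<in> E"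
proof (intro exI conjI)
  show "tri w j = {L w ! j, L w ! Suc j, L w ! Suc (Suc j)}" by (simp add: tri_def)
  show "L w ! j \<noteq> L w ! Suc (Suc j)"
    using nth_eq_iff_index_eq[OF Lf(2)[OF assms(1)], of j "Suc (Suc j)"] assms(2) by simp
  show "{L w ! j, L w ! Suc j} \<in> E" using edge_L[OF assms(1)] assms(2) by simp
  show "{L w ! Suc j, L w ! Suc (Suc j)} \<in> E" using edge_L[OF assms(1)] assms(2) by simp
qed

lemma tri_sub: assumes "w \<in> C" "j + 2 < length (L w)" shows "tri w j \<subseteq> desc S E r w"
  using Lmem(1)[OF assms(1)] assms(2) unfolding tri_def by auto

lemma tri_elem: "x \<in> tri w j \<Longrightarrow> \<exists>k. j \<le> k \<and> k \<le> j + 2 \<and> x = L w ! k"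
  unfolding tri_def by (auto intro: exI[of _ j] exI[of _ "Suc j"] exI[of _ "Suc (Suc j)"])

lemma tri_disj: assumes "w \<in> C" "w' \<in> C" "j + 2 < length (L w)" "j' + 2 < length (L w')"
    "x \<in> tri w j" "x \<in> tri w' j'"
  shows "w = w' \<and> j \<le> j' + 2 \<and> j' \<le> j + 2"
proof -
  obtain k where k: "j \<le> k" "k \<le> j + 2" "x = L w ! k" using tri_elem[OF assms(5)] by blast
  obtain k' where k': "j' \<le> k'" "k' \<le> j' + 2" "x = L w' ! k'" using tri_elem[OF assms(6)] by blast
  have "w = w' \<and> k = k'" using coords[OF assms(1,2), of k k'] k k' assms(3,4) by simp
  then show ?thesis using k k' by simp
qed

end



context spider begin

lemma inner_diss:
  assumes W: "W \<subseteq> C" and FX: "FX \<subseteq> (\<Union>w\<in>W. desc S E r w)"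
    and ch: "\<And>w i. w \<in> W \<Longrightarrow> i < length (L w) \<Longrightarrow> (L w ! i \<in> FX \<longleftrightarrow> i mod 3 \<noteq> \<rho>)"
    and rho: "\<rho> < 3" and x: "x \<in> FX"
  shows "card {y \<in> FX. {x,y} \<in> E} \<le> 1"
proof -
  obtain w where w: "w \<in> W" "x \<in> desc S E r w" using FX x by blast
  have wC: "w \<in> C" using W w by blast
  obtain i where i: "i < length (L w)" "x = L w ! i" using desc_w_elem[OF wC w(2)] by blast
  have im: "i mod 3 \<noteq> \<rho>" using ch[OF w(1) i(1)] x i(2) by simp
  define p where "p = (if i = 0 then u else L w ! (i - 1))"
  have nb: "{y. {x,y} \<in> E} = insert p (if Suc i < length (L w) then {L w ! Suc i} else {})"
    using Lnbrs[OF wC i(1)] i(2) p_def by simp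
  have nb': "y = p \<or> (Suc i < length (L w) \<and> y = L w ! Suc i)" if "{x,y} \<in> E" for y
  proof -
    have "y \<in> {y. {x,y} \<in> E}" using that by simp
    then show ?thesis unfolding nb by (auto split: if_splits)
  qed
  have uFX: "u \<notin> FX" using FX W u_notin by blast
  have "\<exists>z. {y \<in> FX. {x,y} \<in> E} \<subseteq> {z}"
  proof (cases "Suc i mod 3 = \<rho>")
    case True
    have nS: "L w ! Suc i \<notin> FX" if "Suc i < length (L w)" using ch[OF w(1) that] True by simp
    have "{y \<in> FX. {x,y} \<in> E} \<subseteq> {p}"
    proof
      fix y assume "y \<in> {y \<in> FX. {x,y} \<in> E}"
      then have "y \<in> FX" "{x,y} \<in> E" by auto
      then show "y \<in> {p}" using nb' nS by blast
    qed
    then show ?thesis by blast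
  next
    case False
    have pS: "p \<notin> FX"
    proof (cases "i = 0")
      case True then show ?thesis using uFX p_def by simp
    next
      case i0: False
      obtain j where j: "i = Suc j" using i0 by (cases i) auto
      have "j mod 3 < 3" by simp
      then have "(i - 1) mod 3 = \<rho>" using im False rho j
        by (cases "j mod 3 = 0"; cases "j mod 3 = 1"; simp add: mod_Suc)
      then show ?thesis using ch[OF w(1), of "i - 1"] i(1) i0 p_def by simp
    qed
    have "{y \<in> FX. {x,y} \<in> E} \<subseteq> {L w ! Suc i}"
    proof
      fix y assume "y \<in> {y \<in> FX. {x,y} \<in> E}"
      then have "y \<in> FX" "{x,y} \<in> E" by auto
      then show "y \<in> {L w ! Suc i}" using nb' pS by blast
    qed
    then show ?thesis by blast
  qed
  then obtain z where z: "{y \<in> FX. {x,y} \<in> E} \<subseteq> {z}" by blast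
  have "card {y \<in> FX. {x,y} \<in> E} \<le> card {z}" by (rule card_mono[OF _ z]) simp
  then show ?thesis by simp
qed

definition JA where "JA = {(w,i). w \<in> C \<and> i < length (L w) \<and> i mod 3 = 2}"
definition RA where "RA = insert u ((\<lambda>(w,i). L w ! i) ` JA)"
definition FXA where "FXA = desc S E r u - RA"

lemma finite_JA: "finite JA"
proof -
  have "JA \<subseteq> Sigma C (\<lambda>w. {..<length (L w)})" by (auto simp: JA_def)
  moreover have "finite (Sigma C (\<lambda>w. {..<length (L w)}))" using finite_children by blast
  ultimately show ?thesis using finite_subset by blast
qed

lemma RA_sub: "RA \<subseteq> desc S E r u"
proof
  fix x assume "x \<in> RA"
  then consider "x = u" | w i where "(w,i) \<in> JA" "x = L w ! i" unfolding RA_def by auto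
  then show "x \<in> desc S E r u"
  proof cases
    case 1 then show ?thesis using self_desc[OF uS] by simp
  next
    case 2 then show ?thesis using Lmem(1) desc_w_sub by (auto simp: JA_def)
  qed
qed

lemma FXA_char: assumes "w \<in> C" "i < length (L w)" shows "L w ! i \<in> FXA \<longleftrightarrow> i mod 3 \<noteq> 2"
proof -
  have m: "L w ! i \<in> desc S E r u" using Lmem(1)[OF assms] desc_w_sub[OF assms(1)] by blast
  have "L w ! i \<in> RA \<longleftrightarrow> i mod 3 = 2"
  proof
    assume "L w ! i \<in> RA"
    then obtain w' i' where "(w',i') \<in> JA" "L w ! i = L w' ! i'"
      using Lmem(4)[OF assms] unfolding RA_def by auto
    then show "i mod 3 = 2" using coords[OF assms(1), of w' i i'] assms by (auto simp: JA_def)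
  next
    assume "i mod 3 = 2"
    then have "(w,i) \<in> JA" using assms by (simp add: JA_def)
    then show "L w ! i \<in> RA" unfolding RA_def by force
  qed
  then show ?thesis using m by (simp add: FXA_def)
qed

lemma FXA_sub: "FXA \<subseteq> (\<Union>w\<in>C. desc S E r w)"
proof
  fix x assume x: "x \<in> FXA"
  then have "x \<in> desc S E r u" "x \<noteq> u" by (auto simp: FXA_def RA_def)
  then obtain w i where "w \<in> C" "i < length (L w)" "x = L w ! i" using desc_u_elem by blast
  then show "x \<in> (\<Union>w\<in>C. desc S E r w)" using Lmem(1) by blast
qed

lemma caseA_bound:
  fixes sh :: "'a \<Rightarrow> nat" and N :: "'a set"
  assumes sh: "\<And>w i. w \<in> C \<Longrightarrow> i < length (L w) \<Longrightarrow> i mod 3 = 2 \<Longrightarrow> sh w \<le> 2 \<and> i - sh w + 2 < length (L w)"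
    and N3: "\<exists>a b c. N = {a,b,c} \<and> a \<noteq> c \<and> {a,b} \<in> E \<and> {b,c} \<in> E" and Nsub: "N \<subseteq> desc S E r u"
    and Nw: "\<And>w k. w \<in> C \<Longrightarrow> k < length (L w) \<Longrightarrow> L w ! k \<in> N \<Longrightarrow> k + sh w < 2"
    and dF: "dissociation_set S E F"
  shows "card (F \<inter> desc S E r u) \<le> card FXA"
proof -
  define I where "I = insert None (Some ` JA)"
  define T where "T k = (case k of None \<Rightarrow> N | Some (w,i) \<Rightarrow> tri w (i - sh w))" for k
  have JAe: "w \<in> C" "i < length (L w)" "i mod 3 = 2" if "(w,i) \<in> JA" for w i
    using that by (auto simp: JA_def)
  show ?thesis
  proof (rule triple_bound[OF dF fin, of I FXA "desc S E r u" T])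
    show "finite I" using finite_JA by (simp add: I_def)
    show "FXA \<subseteq> desc S E r u" by (auto simp: FXA_def)
    show "desc S E r u \<subseteq> S" by (rule desc_S)
    have "desc S E r u - FXA = RA" using RA_sub by (auto simp: FXA_def)
    moreover have "card RA \<le> Suc (card JA)"
    proof -
      have "card RA \<le> Suc (card ((\<lambda>(w,i). L w ! i) ` JA))" unfolding RA_def by (rule card_insert_le_m1) simp_all
      moreover have "card ((\<lambda>(w,i). L w ! i) ` JA) \<le> card JA" by (rule card_image_le[OF finite_JA])
      ultimately show ?thesis by simp
    qed
    moreover have "card I = Suc (card JA)"
      using finite_JA by (simp add: I_def card_image)
    ultimately show "card (desc S E r u - FXA) \<le> card I" by simp
  next
    fix k assume k: "k \<in> I"
    show "\<exists>a b c. T k = {a,b,c} \<and> a \<noteq> c \<and> {a,b} \<in> E \<and> {b,c} \<in> E"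
    proof (cases k)
      case None then show ?thesis using N3 by (simp add: T_def)
    next
      case (Some p)
      then obtain w i where p: "k = Some (w,i)" "(w,i) \<in> JA" using k by (cases p) (auto simp: I_def)
      have "i - sh w + 2 < length (L w)" using sh JAe[OF p(2)] by blast
      then show ?thesis using tri_P3[OF JAe(1)[OF p(2)]] p(1) by (simp add: T_def)
    qed
    show "T k \<subseteq> desc S E r u"
    proof (cases k)
      case None then show ?thesis using Nsub by (simp add: T_def)
    next
      case (Some p)
      then obtain w i where p: "k = Some (w,i)" "(w,i) \<in> JA" using k by (cases p) (auto simp: I_def)
      have "i - sh w + 2 < length (L w)" using sh JAe[OF p(2)] by blast
      then show ?thesis using tri_sub[OF JAe(1)[OF p(2)]] desc_w_sub[OF JAe(1)[OF p(2)]] p(1)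
        by (auto simp: T_def)
    qed
  next
    fix k k' assume k: "k \<in> I" and k': "k' \<in> I" and kk: "k \<noteq> k'"
    have some_none: "tri w (i - sh w) \<inter> N = {}" if "(w,i) \<in> JA" for w i
    proof -
      note e = JAe[OF that]
      have s: "sh w \<le> 2" "i - sh w + 2 < length (L w)" using sh[OF e] by auto
      { fix x assume x: "x \<in> tri w (i - sh w)" "x \<in> N"
        obtain m where m: "i - sh w \<le> m" "m \<le> i - sh w + 2" "x = L w ! m" using tri_elem[OF x(1)] by blast
        have "m + sh w < 2" using Nw[OF e(1), of m] m s x(2) by simp
        moreover have "2 \<le> i" using e(3) by presburger
        ultimately have False using m(1) s(1) by linarith }
      then show ?thesis by blast
    qed
    have some_some: "tri w (i - sh w) \<inter> tri w' (i' - sh w') = {}"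
      if "(w,i) \<in> JA" "(w',i') \<in> JA" "(w,i) \<noteq> (w',i')" for w i w' i'
    proof -
      note e = JAe[OF that(1)] and e' = JAe[OF that(2)]
      have s: "sh w \<le> 2" "i - sh w + 2 < length (L w)" using sh[OF e] by auto
      have s': "sh w' \<le> 2" "i' - sh w' + 2 < length (L w')" using sh[OF e'] by auto
      { fix x assume x: "x \<in> tri w (i - sh w)" "x \<in> tri w' (i' - sh w')"
        have d: "w = w' \<and> i - sh w \<le> i' - sh w' + 2 \<and> i' - sh w' \<le> i - sh w + 2"
          using tri_disj[OF e(1) e'(1) s(2) s'(2) x] .
        then have "w = w'" by simp
        then have "i \<le> i' + 2" "i' \<le> i + 2" using d s e(3) e'(3) by presburger+
        then have "i = i'" using e(3) e'(3) by presburger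
        then have False using that(3) \<open>w = w'\<close> by simp }
      then show ?thesis by blast
    qed
    show "T k \<inter> T k' = {}"
    proof (cases k)
      case None
      then obtain w' i' where p': "k' = Some (w',i')" "(w',i') \<in> JA" using k' kk by (auto simp: I_def)
      show ?thesis using some_none[OF p'(2)] None p'(1) by (auto simp: T_def)
    next
      case (Some p)
      then obtain w i where p: "k = Some (w,i)" "(w,i) \<in> JA" using k by (cases p) (auto simp: I_def)
      show ?thesis
      proof (cases k')
        case None then show ?thesis using some_none[OF p(2)] p(1) by (auto simp: T_def)
      next
        case (Some q)
        then obtain w' i' where q: "k' = Some (w',i')" "(w',i') \<in> JA" using k' by (cases q) (auto simp: I_def)
        have "(w,i) \<noteq> (w',i')" using kk p q by auto
        then show ?thesis using some_some[OF p(2) q(2)] p(1) q(1) by (simp add: T_def)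
      qed
    qed
  qed
qed

end



definition TC :: "'a set \<Rightarrow> 'a set set \<Rightarrow> 'a \<Rightarrow> 'a set \<Rightarrow> bool" where
  "TC S E r S' \<longleftrightarrow> (\<forall>F'. max_dissociation_set S' (ind E S') F' \<longrightarrow>
             (\<exists>F. max_dissociation_set S E F \<and> (r \<in> F \<longleftrightarrow> r \<in> F')))
       \<and> (\<forall>F. max_dissociation_set S E F \<longrightarrow>
             (\<exists>F'. max_dissociation_set S' (ind E S') F' \<and> (r \<in> F' \<longleftrightarrow> r \<in> F)))"

lemma transfer_TC:
  assumes "finite S" "X \<subseteq> S" "r \<notin> X" "FX \<subseteq> X"
    and "\<And>F. dissociation_set S E F \<Longrightarrow> card (F \<inter> X) \<le> card FX"
    and "\<And>F'. dissociation_set (S - X) (ind E (S - X)) F' \<Longrightarrow> dissociation_set S E (F' \<union> FX)"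
  shows "TC S E r (S - X)"
  unfolding TC_def by (rule transfer[OF assms])

context spider begin

lemma caseA:
  assumes A: "(\<exists>w0\<in>C. length (L w0) mod 3 = 2) \<or>
              (\<exists>w1\<in>C. \<exists>w2\<in>C. w1 \<noteq> w2 \<and> length (L w1) mod 3 = 1 \<and> length (L w2) mod 3 = 1)"
  shows "TC S E r (S - desc S E r u)"
proof (rule transfer_TC[OF fin desc_S])
  show "r \<notin> desc S E r u" using r_desc ur by blast
  show FXs: "FXA \<subseteq> desc S E r u" by (auto simp: FXA_def)
  fix F assume dF: "dissociation_set S E F"
  from A show "card (F \<inter> desc S E r u) \<le> card FXA"
  proof
    assume "\<exists>w0\<in>C. length (L w0) mod 3 = 2"
    then obtain w0 where w0: "w0 \<in> C" "length (L w0) mod 3 = 2" by blast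
    have n2: "Suc 0 < length (L w0)" using w0(2) by presburger
    show ?thesis
    proof (rule caseA_bound[OF _ _ _ _ dF, of "\<lambda>w. if w = w0 then 0 else 2" "{u, L w0 ! 0, L w0 ! 1}"])
      fix w i assume wi: "w \<in> C" "i < length (L w)" "i mod 3 = 2"
      show "(if w = w0 then 0 else 2) \<le> (2::nat) \<and> i - (if w = w0 then 0 else 2) + 2 < length (L w)"
      proof (cases "w = w0")
        case True
        then have "i + 2 < length (L w)" using wi w0(2) by presburger
        then show ?thesis using True by simp
      next
        case False
        have "2 \<le> i" using wi(3) by presburger
        then show ?thesis using False wi(2) by simp
      qed
    next
      show "\<exists>a b c. {u, L w0 ! 0, L w0 ! 1} = {a, b, c} \<and> a \<noteq> c \<and> {a, b} \<in> E \<and> {b, c} \<in> E"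
      proof (intro exI conjI)
        show "{u, L w0 ! 0, L w0 ! 1} = {u, L w0 ! 0, L w0 ! 1}" ..
        show "u \<noteq> L w0 ! 1" using Lmem(4)[OF w0(1) n2] by simp
        show "{u, L w0 ! 0} \<in> E" using edge_u[OF w0(1)] .
        show "{L w0 ! 0, L w0 ! 1} \<in> E" using edge_L[OF w0(1), of 0] n2 by simp
      qed
    next
      show "{u, L w0 ! 0, L w0 ! 1} \<subseteq> desc S E r u"
        using self_desc[OF uS] Lmem(1)[OF w0(1), of 0] Lmem(1)[OF w0(1), of 1] desc_w_sub[OF w0(1)] n2 Lf(1)[OF w0(1)]
        by (simp add: subset_iff)
    next
      fix w k assume wk: "w \<in> C" "k < length (L w)" "L w ! k \<in> {u, L w0 ! 0, L w0 ! 1}"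
      have "L w ! k \<noteq> u" using Lmem(4)[OF wk(1,2)] .
      then have "L w ! k = L w0 ! 0 \<or> L w ! k = L w0 ! 1" using wk(3) by blast
      then have "w = w0 \<and> k < 2"
      proof
        assume "L w ! k = L w0 ! 0" then show ?thesis using coords[OF wk(1) w0(1) wk(2), of 0] n2 Lf(1)[OF w0(1)] by simp
      next
        assume "L w ! k = L w0 ! 1" then show ?thesis using coords[OF wk(1) w0(1) wk(2), of 1] n2 Lf(1)[OF w0(1)] by simp
      qed
      then show "k + (if w = w0 then 0 else 2) < 2" by simp
    qed
  next
    assume "\<exists>w1\<in>C. \<exists>w2\<in>C. w1 \<noteq> w2 \<and> length (L w1) mod 3 = 1 \<and> length (L w2) mod 3 = 1"
    then obtain w1 w2 where w: "w1 \<in> C" "w2 \<in> C" "w1 \<noteq> w2" "length (L w1) mod 3 = 1" "length (L w2) mod 3 = 1"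
      by blast
    have n1: "0 < length (L w1)" "0 < length (L w2)" using Lf(1) w(1,2) by auto
    show ?thesis
    proof (rule caseA_bound[OF _ _ _ _ dF, of "\<lambda>w. if w = w1 \<or> w = w2 then 1 else 2" "{L w1 ! 0, u, L w2 ! 0}"])
      fix w i assume wi: "w \<in> C" "i < length (L w)" "i mod 3 = 2"
      have i2: "2 \<le> i" using wi(3) by presburger
      show "(if w = w1 \<or> w = w2 then 1 else 2) \<le> (2::nat) \<and> i - (if w = w1 \<or> w = w2 then 1 else 2) + 2 < length (L w)"
      proof (cases "w = w1 \<or> w = w2")
        case True
        then have "length (L w) mod 3 = 1" using w by blast
        then have "i + 1 < length (L w)" using wi by presburger
        then show ?thesis using True i2 by simp
      next
        case False
        then show ?thesis using i2 wi(2) by simp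
      qed
    next
      show "\<exists>a b c. {L w1 ! 0, u, L w2 ! 0} = {a, b, c} \<and> a \<noteq> c \<and> {a, b} \<in> E \<and> {b, c} \<in> E"
      proof (intro exI conjI)
        show "{L w1 ! 0, u, L w2 ! 0} = {L w1 ! 0, u, L w2 ! 0}" ..
        show "L w1 ! 0 \<noteq> L w2 ! 0" using coords[OF w(1,2) n1] w(3) by blast
        show "{L w1 ! 0, u} \<in> E" using edge_u[OF w(1)] by (simp add: insert_commute)
        show "{u, L w2 ! 0} \<in> E" using edge_u[OF w(2)] .
      qed
    next
      show "{L w1 ! 0, u, L w2 ! 0} \<subseteq> desc S E r u"
        using self_desc[OF uS] Lmem(1)[OF w(1) n1(1)] Lmem(1)[OF w(2) n1(2)]
          desc_w_sub[OF w(1)] desc_w_sub[OF w(2)] by auto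
    next
      fix w k assume wk: "w \<in> C" "k < length (L w)" "L w ! k \<in> {L w1 ! 0, u, L w2 ! 0}"
      have "L w ! k \<noteq> u" using Lmem(4)[OF wk(1,2)] .
      then have "L w ! k = L w1 ! 0 \<or> L w ! k = L w2 ! 0" using wk(3) by blast
      then have "(w = w1 \<or> w = w2) \<and> k = 0"
      proof
        assume "L w ! k = L w1 ! 0" then show ?thesis using coords[OF wk(1) w(1) wk(2) n1(1)] by simp
      next
        assume "L w ! k = L w2 ! 0" then show ?thesis using coords[OF wk(1) w(2) wk(2) n1(2)] by simp
      qed
      then show "k + (if w = w1 \<or> w = w2 then 1 else 2) < 2" by simp
    qed
  qed
next
  fix F' assume dF': "dissociation_set (S - desc S E r u) (ind E (S - desc S E r u)) F'"
  show "dissociation_set S E (F' \<union> FXA)"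
  proof (rule union_general[OF desc_S _ _ _ _ dF'])
    show "\<forall>a\<in>desc S E r u. desc S E r a \<subseteq> desc S E r u" using desc_subset by blast
    show "FXA \<subseteq> desc S E r u" by (auto simp: FXA_def)
    show "\<forall>y\<in>FXA. y \<noteq> r \<and> parent y \<in> desc S E r u"
    proof
      fix y assume "y \<in> FXA"
      then have "y \<in> desc S E r u" "y \<noteq> u" by (auto simp: FXA_def RA_def)
      then show "y \<noteq> r \<and> parent y \<in> desc S E r u" using parent_in_desc by blast
    qed
    show "\<forall>x\<in>FXA. card {y \<in> FXA. {x, y} \<in> E} \<le> 1"
      using inner_diss[OF order_refl FXA_sub FXA_char] by simp
  qed
qed

definition XB where "XB z = (\<Union>w\<in>C - {z}. desc S E r w)"
definition JB where "JB z = {(w,i). w \<in> C - {z} \<and> i < length (L w) \<and> i mod 3 = 0}"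
definition FXB where "FXB z = XB z - (\<lambda>(w,i). L w ! i) ` JB z"

lemma finite_JB: "finite (JB z)"
proof -
  have "JB z \<subseteq> Sigma C (\<lambda>w. {..<length (L w)})" by (auto simp: JB_def)
  moreover have "finite (Sigma C (\<lambda>w. {..<length (L w)}))" using finite_children by blast
  ultimately show ?thesis using finite_subset by blast
qed

lemma XB_S: "XB z \<subseteq> S" using desc_S by (auto simp: XB_def)

lemma FXB_char: assumes "w \<in> C - {z}" "i < length (L w)" shows "L w ! i \<in> FXB z \<longleftrightarrow> i mod 3 \<noteq> 0"
proof -
  have wC: "w \<in> C" using assms by simp
  have m: "L w ! i \<in> XB z" using Lmem(1)[OF wC assms(2)] assms(1) by (auto simp: XB_def)
  have "L w ! i \<in> (\<lambda>(w,i). L w ! i) ` JB z \<longleftrightarrow> i mod 3 = 0"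
  proof
    assume "L w ! i \<in> (\<lambda>(w,i). L w ! i) ` JB z"
    then obtain w' i' where "(w',i') \<in> JB z" "L w ! i = L w' ! i'" by auto
    then show "i mod 3 = 0" using coords[OF wC, of w' i i'] assms by (auto simp: JB_def)
  next
    assume "i mod 3 = 0"
    then have "(w,i) \<in> JB z" using assms by (simp add: JB_def)
    then show "L w ! i \<in> (\<lambda>(w,i). L w ! i) ` JB z" by force
  qed
  then show ?thesis using m by (simp add: FXB_def)
qed

lemma FXB_sub: "FXB z \<subseteq> (\<Union>w\<in>C - {z}. desc S E r w)" by (auto simp: FXB_def XB_def)

lemma caseB:
  assumes z: "z \<in> C" and n0: "\<forall>w\<in>C - {z}. length (L w) mod 3 = 0"
  shows "TC S E r (S - XB z)"
proof (rule transfer_TC[OF fin XB_S])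
  show "r \<notin> XB z" using r_notin by (auto simp: XB_def)
  show "FXB z \<subseteq> XB z" by (auto simp: FXB_def)
  have JBe: "w \<in> C" "w \<noteq> z" "i < length (L w)" "i mod 3 = 0" "i + 2 < length (L w)" if "(w,i) \<in> JB z" for w i
  proof -
    show "w \<in> C" "w \<noteq> z" "i < length (L w)" "i mod 3 = 0" using that by (auto simp: JB_def)
    then have "length (L w) mod 3 = 0" using n0 by blast
    then show "i + 2 < length (L w)" using \<open>i < length (L w)\<close> \<open>i mod 3 = 0\<close> by presburger
  qed
  fix F assume dF: "dissociation_set S E F"
  show "card (F \<inter> XB z) \<le> card (FXB z)"
  proof (rule triple_bound[OF dF fin finite_JB, where FX = "FXB z" and X = "XB z" and T = "\<lambda>(w,i). tri w i"])
    show "FXB z \<subseteq> XB z" by (auto simp: FXB_def)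
    show "XB z \<subseteq> S" by (rule XB_S)
    have "XB z - FXB z \<subseteq> (\<lambda>(w,i). L w ! i) ` JB z" by (auto simp: FXB_def)
    then have "card (XB z - FXB z) \<le> card ((\<lambda>(w,i). L w ! i) ` JB z)"
      by (rule card_mono[rotated]) (use finite_JB in simp)
    also have "\<dots> \<le> card (JB z)" by (rule card_image_le[OF finite_JB])
    finally show "card (XB z - FXB z) \<le> card (JB z)" .
  next
    fix k assume k: "k \<in> JB z"
    obtain w i where p: "k = (w,i)" by (cases k)
    note e = JBe[OF k[unfolded p]]
    show "\<exists>a b c. (case k of (w, i) \<Rightarrow> tri w i) = {a, b, c} \<and> a \<noteq> c \<and> {a, b} \<in> E \<and> {b, c} \<in> E"
      using tri_P3[OF e(1) e(5)] p by simp
    show "(case k of (w, i) \<Rightarrow> tri w i) \<subseteq> XB z"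
      using tri_sub[OF e(1) e(5)] p e(1,2) by (auto simp: XB_def)
  next
    fix k k' assume k: "k \<in> JB z" and k': "k' \<in> JB z" and kk: "k \<noteq> k'"
    obtain w i where p: "k = (w,i)" by (cases k)
    obtain w' i' where p': "k' = (w',i')" by (cases k')
    note e = JBe[OF k[unfolded p]] and e' = JBe[OF k'[unfolded p']]
    { fix x assume x: "x \<in> tri w i" "x \<in> tri w' i'"
      have d: "w = w' \<and> i \<le> i' + 2 \<and> i' \<le> i + 2" using tri_disj[OF e(1) e'(1) e(5) e'(5) x] .
      then have "i \<le> i' + 2" "i' \<le> i + 2" by auto
      then have "i = i'" using e(4) e'(4) by presburger
      then have False using d kk p p' by simp }
    then show "(case k of (w, i) \<Rightarrow> tri w i) \<inter> (case k' of (w, i) \<Rightarrow> tri w i) = {}"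
      using p p' by auto
  qed
next
  fix F' assume dF': "dissociation_set (S - XB z) (ind E (S - XB z)) F'"
  show "dissociation_set S E (F' \<union> FXB z)"
  proof (rule union_general[OF XB_S _ _ _ _ dF'])
    show "\<forall>a\<in>XB z. desc S E r a \<subseteq> XB z"
    proof
      fix a assume "a \<in> XB z"
      then obtain w where "w \<in> C - {z}" "a \<in> desc S E r w" by (auto simp: XB_def)
      then show "desc S E r a \<subseteq> XB z" using desc_subset by (auto simp: XB_def)
    qed
    show "FXB z \<subseteq> XB z" by (auto simp: FXB_def)
    show "\<forall>y\<in>FXB z. y \<noteq> r \<and> parent y \<in> XB z"
    proof
      fix y assume y: "y \<in> FXB z"
      then obtain w where w: "w \<in> C - {z}" "y \<in> desc S E r w" by (auto simp: FXB_def XB_def)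
      then have wC: "w \<in> C" by simp
      obtain i where i: "i < length (L w)" "y = L w ! i" using desc_w_elem[OF wC w(2)] by blast
      have "i mod 3 \<noteq> 0" using FXB_char[OF w(1) i(1)] y i(2) by simp
      then have i0: "i \<noteq> 0" by auto
      have "parent y = L w ! (i - 1)" using Lparent[OF wC i(1)] i0 i(2) by simp
      moreover have "L w ! (i - 1) \<in> desc S E r w" using Lmem(1)[OF wC] i(1) by simp
      ultimately have "parent y \<in> XB z" using w(1) by (auto simp: XB_def)
      moreover have "y \<noteq> r" using Lmem(3)[OF wC i(1)] i(2) by simp
      ultimately show "y \<noteq> r \<and> parent y \<in> XB z" by simp
    qed
    show "\<forall>x\<in>FXB z. card {y \<in> FXB z. {x, y} \<in> E} \<le> 1"
    proof
      fix x assume x: "x \<in> FXB z"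
      show "card {y \<in> FXB z. {x, y} \<in> E} \<le> 1"
        by (rule inner_diss[OF _ FXB_sub FXB_char _ x]) auto
    qed
  qed
qed

end



lemma ind_ind: "S' \<subseteq> S \<Longrightarrow> ind (ind E S) S' = ind E S'" by (auto simp: ind_def)

lemma two_elems: assumes "2 \<le> card A" shows "\<exists>a\<in>A. \<exists>b\<in>A. a \<noteq> b"
proof -
  have "finite A" using assms card.infinite by force
  then have "\<not> card A \<le> Suc 0" using assms by simp
  then show ?thesis using card_le_Suc0_iff_eq[OF \<open>finite A\<close>] by blast
qed

context spider begin

lemma XB_down: "\<forall>a\<in>XB z. desc S E r a \<subseteq> XB z"
proof
  fix a assume "a \<in> XB z"
  then obtain w where "w \<in> C - {z}" "a \<in> desc S E r w" by (auto simp: XB_def)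
  then show "desc S E r a \<subseteq> XB z" using desc_subset by (auto simp: XB_def)
qed

lemma r_notin_XB: "r \<notin> XB z" using r_notin by (auto simp: XB_def)

end

lemma step_lemma:
  assumes rt: "rtree S (ind E0 S) r" and ps: "prune_step E0 r S S'"
  shows "rtree S' (ind E0 S') r \<and> S' \<subseteq> S \<and> TC S (ind E0 S) r S'"
proof -
  obtain u where u: "u \<in> S" "u \<noteq> r"
     "\<forall>u'\<in>S. u' \<noteq> r \<and> deg (ind E0 S) u' \<ge> 3 \<longrightarrow> dist S (ind E0 S) r u' \<le> dist S (ind E0 S) r u"
     and cs: "((card (children_mod S (ind E0 S) r u 2) \<ge> 1 \<or> card (children_mod S (ind E0 S) r u 1) \<ge> 2)
              \<and> S' = S - desc S (ind E0 S) r u) \<or>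
        (card (children_mod S (ind E0 S) r u 2) = 0 \<and> card (children_mod S (ind E0 S) r u 1) \<le> 1 \<and>
          (\<exists>z\<in>children S (ind E0 S) r u. (card (children_mod S (ind E0 S) r u 1) = 1 \<longrightarrow> children_mod S (ind E0 S) r u 1 = {z}) \<and>
             S' = S - (\<Union>w\<in>children S (ind E0 S) r u - {z}. desc S (ind E0 S) r w)))"
    using ps unfolding prune_step_def Let_def by blast
  have sp: "spider S (ind E0 S) r u" unfolding spider_def spider_axioms_def using rt u by blast
  interpret sp: spider S "ind E0 S" r u by (rule sp)
  let ?C = "children S (ind E0 S) r u"
  let ?C1 = "children_mod S (ind E0 S) r u 1"
  let ?C2 = "children_mod S (ind E0 S) r u 2"
  have Cm: "\<And>i. children_mod S (ind E0 S) r u i = {w \<in> ?C. length (sp.L w) mod 3 = i}"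
    using sp.n_card by (auto simp: children_mod_def)
  have finC1: "finite ?C1" "finite ?C2" using sp.finite_children by (auto simp: children_mod_def)
  from cs show ?thesis
  proof
    assume A: "(card ?C2 \<ge> 1 \<or> card ?C1 \<ge> 2) \<and> S' = S - desc S (ind E0 S) r u"
    have "(\<exists>w0\<in>?C. length (sp.L w0) mod 3 = 2) \<or>
              (\<exists>w1\<in>?C. \<exists>w2\<in>?C. w1 \<noteq> w2 \<and> length (sp.L w1) mod 3 = 1 \<and> length (sp.L w2) mod 3 = 1)"
    proof (cases "card ?C2 \<ge> 1")
      case True
      then have "?C2 \<noteq> {}" by auto
      then show ?thesis using Cm[of 2] by auto
    next
      case False
      then have "card ?C1 \<ge> 2" using A by auto
      then obtain a b where "a \<in> ?C1" "b \<in> ?C1" "a \<noteq> b" using two_elems by blast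
      then show ?thesis using Cm[of 1] by auto
    qed
    then have tc: "TC S (ind E0 S) r (S - desc S (ind E0 S) r u)" by (rule sp.caseA)
    have "rtree (S - desc S (ind E0 S) r u) (ind (ind E0 S) (S - desc S (ind E0 S) r u)) r"
      apply (rule sp.rtree_remove)
      using sp.desc_S sp.r_desc sp.ur sp.desc_subset by blast+
    then show ?thesis using A tc ind_ind[of "S - desc S (ind E0 S) r u" S E0] by auto
  next
    assume B: "card ?C2 = 0 \<and> card ?C1 \<le> 1 \<and>
          (\<exists>z\<in>?C. (card ?C1 = 1 \<longrightarrow> ?C1 = {z}) \<and>
             S' = S - (\<Union>w\<in>?C - {z}. desc S (ind E0 S) r w))"
    then obtain z where z: "z \<in> ?C" "card ?C1 = 1 \<longrightarrow> ?C1 = {z}"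
      "S' = S - (\<Union>w\<in>?C - {z}. desc S (ind E0 S) r w)" by blast
    have C2e: "?C2 = {}" using B finC1 by simp
    have n0: "\<forall>w\<in>?C - {z}. length (sp.L w) mod 3 = 0"
    proof
      fix w assume w: "w \<in> ?C - {z}"
      have "w \<notin> ?C2" using C2e by simp
      then have m2: "length (sp.L w) mod 3 \<noteq> 2" using Cm[of 2] w by auto
      have "w \<notin> ?C1"
      proof
        assume "w \<in> ?C1"
        then have "card ?C1 \<ge> 1" using finC1 card_0_eq by fastforce
        then have "?C1 = {z}" using B z(2) by simp
        then show False using \<open>w \<in> ?C1\<close> w by simp
      qed
      then have "length (sp.L w) mod 3 \<noteq> 1" using Cm[of 1] w by auto
      then show "length (sp.L w) mod 3 = 0" using m2 by presburger
    qed
    have S'eq: "S' = S - sp.XB z" using z(3) by (simp add: sp.XB_def)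
    have tc: "TC S (ind E0 S) r (S - sp.XB z)" using sp.caseB[OF z(1) n0] .
    have "rtree (S - sp.XB z) (ind (ind E0 S) (S - sp.XB z)) r"
      by (rule sp.rtree_remove[OF sp.XB_S sp.r_notin_XB sp.XB_down])
    then show ?thesis using S'eq tc ind_ind[of "S - sp.XB z" S E0] by auto
  qed
qed




theorem lemma3p1:
  fixes V :: "'a set" and E :: "'a set set" and v :: 'a and S :: "'a set"
  assumes "is_tree V E" and "v \<in> V" and "is_pruning V E v S"
  shows "(\<forall>Fb. max_dissociation_set S (ind E S) Fb \<longrightarrow>
            (\<exists>F. max_dissociation_set V E F \<and> (v \<in> F \<longleftrightarrow> v \<in> Fb)))
       \<and> (\<forall>F. max_dissociation_set V E F \<longrightarrow>
            (\<exists>Fb. max_dissociation_set S (ind E S) Fb \<and> (v \<in> Fb \<longleftrightarrow> v \<in> F)))"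
proof -
  have tr: "simple_graph V E" "connected_graph V E" "\<not> (\<exists>ps. is_cycle V E ps)"
    using assms(1) unfolding is_tree_def by auto
  have edges: "\<forall>e\<in>E. \<exists>a b. a \<noteq> b \<and> a \<in> V \<and> b \<in> V \<and> e = {a, b}" and finV: "finite V"
    using tr(1) unfolding simple_graph_def by auto
  have indV: "ind E V = E" using edges by (auto simp: ind_def)
  have rt0: "rtree V (ind E V) v"
    unfolding indV
  proof
    show "finite V" by (rule finV)
    show "v \<in> V" by (rule assms(2))
    show "\<forall>e\<in>E. \<exists>a b. a \<noteq> b \<and> a \<in> V \<and> b \<in> V \<and> e = {a, b}" by (rule edges)
    show "\<not> (\<exists>c. is_cycle V E c)" by (rule tr(3))
    show "\<forall>a\<in>V. \<exists>ps. is_path V E ps \<and> hd ps = v \<and> last ps = a"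
      using tr(2) assms(2) unfolding connected_graph_def by blast
  qed
  have rs: "(prune_step E v)\<^sup>*\<^sup>* V S" using assms(3) unfolding is_pruning_def by blast
  define Q where "Q S \<longleftrightarrow> (\<forall>Fb. max_dissociation_set S (ind E S) Fb \<longrightarrow>
            (\<exists>F. max_dissociation_set V E F \<and> (v \<in> F \<longleftrightarrow> v \<in> Fb)))
       \<and> (\<forall>F. max_dissociation_set V E F \<longrightarrow>
            (\<exists>Fb. max_dissociation_set S (ind E S) Fb \<and> (v \<in> Fb \<longleftrightarrow> v \<in> F)))" for S
  have "rtree S (ind E S) v \<and> Q S"
    using rs
  proof (induction rule: rtranclp_induct)
    case base
    then show ?case using rt0 indV by (auto simp: Q_def)
  next
    case (step y z)
    have st: "rtree z (ind E z) v" "z \<subseteq> y" "TC y (ind E y) v z"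
      using step_lemma[OF _ step.hyps(2)] step.IH by auto
    have ii: "ind (ind E y) z = ind E z" using ind_ind[OF st(2)] .
    have tc1: "\<forall>F'. max_dissociation_set z (ind E z) F' \<longrightarrow>
             (\<exists>F. max_dissociation_set y (ind E y) F \<and> (v \<in> F \<longleftrightarrow> v \<in> F'))"
      and tc2: "\<forall>F. max_dissociation_set y (ind E y) F \<longrightarrow>
             (\<exists>F'. max_dissociation_set z (ind E z) F' \<and> (v \<in> F' \<longleftrightarrow> v \<in> F))"
      using st(3) unfolding TC_def ii by auto
    have qy: "\<forall>Fb. max_dissociation_set y (ind E y) Fb \<longrightarrow>
            (\<exists>F. max_dissociation_set V E F \<and> (v \<in> F \<longleftrightarrow> v \<in> Fb))"
       "\<forall>F. max_dissociation_set V E F \<longrightarrow>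
            (\<exists>Fb. max_dissociation_set y (ind E y) Fb \<and> (v \<in> Fb \<longleftrightarrow> v \<in> F))"
      using step.IH unfolding Q_def by auto
    have "Q z"
      unfolding Q_def
    proof (intro conjI allI impI)
      fix Fb assume "max_dissociation_set z (ind E z) Fb"
      then obtain F1 where F1: "max_dissociation_set y (ind E y) F1" "v \<in> F1 \<longleftrightarrow> v \<in> Fb" using tc1 by blast
      then obtain F where "max_dissociation_set V E F" "v \<in> F \<longleftrightarrow> v \<in> F1" using qy(1) by blast
      then show "\<exists>F. max_dissociation_set V E F \<and> (v \<in> F \<longleftrightarrow> v \<in> Fb)" using F1(2) by blast
    next
      fix F assume "max_dissociation_set V E F"
      then obtain F1 where F1: "max_dissociation_set y (ind E y) F1" "v \<in> F1 \<longleftrightarrow> v \<in> F" using qy(2) by blast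
      then obtain Fb where "max_dissociation_set z (ind E z) Fb" "v \<in> Fb \<longleftrightarrow> v \<in> F1" using tc2 by blast
      then show "\<exists>Fb. max_dissociation_set z (ind E z) Fb \<and> (v \<in> Fb \<longleftrightarrow> v \<in> F)" using F1(2) by blast
    qed
    then show ?case using st(1) by blast
  qed
  then show ?thesis unfolding Q_def by blast
qed


end
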